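(* Let $\hat y=K\hat x$ and let $Y_1,Y_2,\dots$ be i.i.d. $\mathcal{Y}$-valued random variables with $\mathbb{E}[Y_1]=\hat y$ and $\mathbb{E}\|Y_1-\hat y\|^2<\infty$. Assume there are $q>0$, $p>1$ with $q>p-1$, $\sigma_j^2\asymp j^{-q}$ and $\mathbb{E}(Y_1-\hat y,u_j)^2\asymp j^{-p}$. Let $\varepsilon>0$ with $p>1+\varepsilon$, set $d_j:=j^{\frac{p-1-\varepsilon}{2}}$, and assume $\hat x\in\mathcal{X}_{\nu,\rho}$ with $\nu,\rho>0$. Define $$\delta_n':=\frac{1}{\sqrt n}\sqrt{\frac{1}{n-1}\sum_{i=1}^n\sum_{j=1}^\infty d_j^2(Y_i-\bar Y_n,u_j)^2},\qquad k_n:=\min\Big\{k\ge0:\ \sqrt{\textstyle\sum_{j=k+1}^\infty d_j^2(\bar Y_n,u_j)^2}\le\delta_n'\Big\}.$$ Let $\nu':=\frac{q}{q+1+\varepsilon-p}\nu$. Then there exists $L>0$ such that $$\mathbb{P}\left(\|\bar X^n_{k_n}-\hat x\|\le L\,\rho^{\frac{1}{1+\nu'}}\left(\frac{1}{\sqrt n}\right)^{\frac{\nu'}{\nu'+1}}\right)\to1\quad (n\to\infty).$$ (Note $\frac{\nu'}{\nu'+1}=\frac{\nu}{\nu+1-\frac{p-1-\varepsilon}{q}}$.)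
   Context: $\mathcal{X},\mathcal{Y}$ are infinite-dimensional real separable Hilbert spaces and $K:\mathcal{X}\to\mathcal{Y}$ is a compact linear operator with dense range, with singular value decomposition $(\sigma_j,u_j,v_j)_{j\in\mathbb{N}}$: $(u_j)$ is an orthonormal basis of $\mathcal{Y}$, $(v_j)$ an orthonormal basis of $\mathcal{N}(K)^\perp$, $(\sigma_j)$ is a nonincreasing sequence of positive numbers converging to $0$, and $Kv_j=\sigma_ju_j$. For $\nu,\rho>0$, $\mathcal{X}_{\nu,\rho}:=\{(K^*K)^{\nu/2}\xi:\xi\in\mathcal{X},\|\xi\|\le\rho\}=\{\sum_j\sigma_j^\nu(\xi,v_j)v_j:\|\xi\|\le\rho\}$. $\bar Y_n:=\frac1n\sum_{i=1}^nY_i$ and $\bar X^n_k:=\sum_{j=1}^k\sigma_j^{-1}(\bar Y_n,u_j)v_j$ (with $\bar X^n_0=0$). $a_j\asymp b_j$ means $cb_j\le a_j\le Cb_j$ for constants $0<c\le C$ independent of $j$. *)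

theory Defs
  imports "HOL-Probability.Probability"
begin

text \<open>Indices j of the singular system start at 1, as in the paper; values at index 0 are irrelevant.\<close>

definition asymp_equiv_pos :: "(nat \<Rightarrow> real) \<Rightarrow> (nat \<Rightarrow> real) \<Rightarrow> bool" where
  "asymp_equiv_pos a b \<longleftrightarrow>
     (\<exists>c C. 0 < c \<and> c \<le> C \<and> (\<forall>j\<ge>1. c * b j \<le> a j \<and> a j \<le> C * b j))"

definition ybar :: "(nat \<Rightarrow> 'a \<Rightarrow> 'y::real_vector) \<Rightarrow> nat \<Rightarrow> 'a \<Rightarrow> 'y" where
  "ybar Y n \<omega> = (1 / real n) *\<^sub>R (\<Sum>i=1..n. Y i \<omega>)"

definition xbar :: "(nat \<Rightarrow> real) \<Rightarrow> (nat \<Rightarrow> 'y::real_inner) \<Rightarrow> (nat \<Rightarrow> 'x::real_vector)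
    \<Rightarrow> 'y \<Rightarrow> nat \<Rightarrow> 'x" where
  "xbar \<sigma> u v y k = (\<Sum>j=1..k. ((y \<bullet> u j) / \<sigma> j) *\<^sub>R v j)"

definition delta' :: "(nat \<Rightarrow> real) \<Rightarrow> (nat \<Rightarrow> 'y::real_inner) \<Rightarrow> (nat \<Rightarrow> 'a \<Rightarrow> 'y)
    \<Rightarrow> nat \<Rightarrow> 'a \<Rightarrow> real" where
  "delta' d u Y n \<omega> = (1 / sqrt (real n)) * sqrt (1 / (real n - 1) *
     (\<Sum>i=1..n. \<Sum>\<^sub>\<infinity>j\<in>{1..}. (d j)\<^sup>2 * ((Y i \<omega> - ybar Y n \<omega>) \<bullet> u j)\<^sup>2))"

definition kstop :: "(nat \<Rightarrow> real) \<Rightarrow> (nat \<Rightarrow> 'y::real_inner) \<Rightarrow> (nat \<Rightarrow> 'a \<Rightarrow> 'y)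
    \<Rightarrow> nat \<Rightarrow> 'a \<Rightarrow> nat" where
  "kstop d u Y n \<omega> = (LEAST k::nat.
     sqrt (\<Sum>\<^sub>\<infinity>j\<in>{k+1..}. (d j)\<^sup>2 * (ybar Y n \<omega> \<bullet> u j)\<^sup>2) \<le> delta' d u Y n \<omega>)"

end

theory Submission
  imports Defs
begin

lemma orth_norm2:
  fixes v :: "nat \<Rightarrow> 'x::real_inner"
  assumes on: "\<And>i j. i \<ge> 1 \<Longrightarrow> j \<ge> 1 \<Longrightarrow> v i \<bullet> v j = (if i = j then 1 else 0)"
    and F: "finite F" "F \<subseteq> {1..}"
  shows "(norm (\<Sum>j\<in>F. c j *\<^sub>R v j))\<^sup>2 = (\<Sum>j\<in>F. (c j)\<^sup>2)"
proof -
  have "(norm (\<Sum>j\<in>F. c j *\<^sub>R v j))\<^sup>2 = (\<Sum>i\<in>F. \<Sum>j\<in>F. c i * (c j * (v j \<bullet> v i)))"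
    by (simp add: power2_norm_eq_inner inner_sum_left inner_sum_right sum_distrib_left)
  also have "\<dots> = (\<Sum>i\<in>F. \<Sum>j\<in>F. if i = j then c i * c j else 0)"
    using F by (intro sum.cong refl) (auto simp: on subset_iff)
  also have "\<dots> = (\<Sum>j\<in>F. (c j)\<^sup>2)"
    using F by (simp add: power2_eq_square)
  finally show ?thesis .
qed

lemma orth_norm:
  fixes v :: "nat \<Rightarrow> 'x::real_inner"
  assumes on: "\<And>i j. i \<ge> 1 \<Longrightarrow> j \<ge> 1 \<Longrightarrow> v i \<bullet> v j = (if i = j then 1 else 0)"
    and F: "finite F" "F \<subseteq> {1..}"
  shows "norm (\<Sum>j\<in>F. c j *\<^sub>R v j) = sqrt (\<Sum>j\<in>F. (c j)\<^sup>2)"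
  using orth_norm2[OF on F, of c] by (metis norm_ge_zero real_sqrt_unique)

lemma bessel:
  fixes v :: "nat \<Rightarrow> 'x::real_inner"
  assumes on: "\<And>i j. i \<ge> 1 \<Longrightarrow> j \<ge> 1 \<Longrightarrow> v i \<bullet> v j = (if i = j then 1 else 0)"
    and F: "finite F" "F \<subseteq> {1..}"
  shows "(\<Sum>j\<in>F. (\<xi> \<bullet> v j)\<^sup>2) \<le> (norm \<xi>)\<^sup>2"
proof -
  define P where "P = (\<Sum>j\<in>F. (\<xi> \<bullet> v j) *\<^sub>R v j)"
  have n2: "(norm P)\<^sup>2 = (\<Sum>j\<in>F. (\<xi> \<bullet> v j)\<^sup>2)"
    unfolding P_def by (rule orth_norm2[OF on F])
  have ip: "\<xi> \<bullet> P = (\<Sum>j\<in>F. (\<xi> \<bullet> v j)\<^sup>2)"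
    unfolding P_def by (simp add: inner_sum_right power2_eq_square)
  have "0 \<le> (norm (\<xi> - P))\<^sup>2" by simp
  also have "\<dots> = (norm \<xi>)\<^sup>2 - 2 * (\<xi> \<bullet> P) + (norm P)\<^sup>2"
    by (simp add: power2_norm_eq_inner inner_diff_left inner_diff_right inner_commute)
  finally show ?thesis using n2 ip by simp
qed

lemma has_sum_orth_norm_le:
  fixes v :: "nat \<Rightarrow> 'x::real_inner"
  assumes on: "\<And>i j. i \<ge> 1 \<Longrightarrow> j \<ge> 1 \<Longrightarrow> v i \<bullet> v j = (if i = j then 1 else 0)"
    and S: "S \<subseteq> {1..}"
    and hs: "((\<lambda>j. c j *\<^sub>R v j) has_sum R) S"
    and B: "\<And>F. finite F \<Longrightarrow> F \<subseteq> S \<Longrightarrow> (\<Sum>j\<in>F. (c j)\<^sup>2) \<le> B"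
  shows "norm R \<le> sqrt B"
proof -
  have "((\<lambda>F. norm (\<Sum>j\<in>F. c j *\<^sub>R v j)) \<longlongrightarrow> norm R) (finite_subsets_at_top S)"
    using hs unfolding has_sum_def by (intro tendsto_norm)
  moreover have "\<forall>\<^sub>F F in finite_subsets_at_top S. norm (\<Sum>j\<in>F. c j *\<^sub>R v j) \<le> sqrt B"
  proof (rule eventually_finite_subsets_at_top_weakI)
    fix F assume F: "finite F" "F \<subseteq> S"
    then have "norm (\<Sum>j\<in>F. c j *\<^sub>R v j) = sqrt (\<Sum>j\<in>F. (c j)\<^sup>2)"
      using S by (intro orth_norm[OF on]) auto
    also have "\<dots> \<le> sqrt B" using B[OF F] by simp
    finally show "norm (\<Sum>j\<in>F. c j *\<^sub>R v j) \<le> sqrt B" .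
  qed
  ultimately show ?thesis
    by (intro tendsto_upperbound[of _ _ "finite_subsets_at_top S"]) (auto simp: finite_subsets_at_top_neq_bot)
qed

lemma infsum_nn_enn:
  fixes f :: "nat \<Rightarrow> real"
  assumes nn: "\<And>j. j \<in> S \<Longrightarrow> 0 \<le> f j"
  shows "infsum f S = enn2real (\<Sum>j. ennreal (if j \<in> S then f j else 0))"
proof -
  define g where "g j = (if j \<in> S then f j else 0)" for j
  have g0: "\<And>j. 0 \<le> g j" using nn by (auto simp: g_def)
  have e: "infsum f S = infsum g UNIV" by (rule infsum_cong_neutral) (auto simp: g_def)
  show ?thesis
  proof (cases "summable g")
    case True
    then have "(g has_sum suminf g) UNIV"
      using sums_nonneg_imp_has_sum g0 summable_sums by blast
    then have "infsum g UNIV = suminf g" by (rule infsumI)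
    moreover have "(\<Sum>j. ennreal (g j)) = ennreal (suminf g)" by (rule suminf_ennreal2[OF g0 True])
    ultimately show ?thesis using e g0 by (simp add: g_def[symmetric] suminf_nonneg[OF True])
  next
    case False
    then have "\<not> g summable_on UNIV" using summable_on_UNIV_nonneg_real_iff g0 by blast
    then have "infsum g UNIV = 0" by (rule infsum_not_exists)
    moreover have "(\<Sum>j. ennreal (g j)) = top" using False summable_suminf_not_top g0 by blast
    ultimately show ?thesis using e by (simp add: g_def[symmetric])
  qed
qed

lemma borel_measurable_infsum_nn:
  fixes f :: "nat \<Rightarrow> 'a \<Rightarrow> real"
  assumes [measurable]: "\<And>j. f j \<in> borel_measurable M"
    and nn: "\<And>j \<omega>. j \<in> S \<Longrightarrow> 0 \<le> f j \<omega>"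
  shows "(\<lambda>\<omega>. infsum (\<lambda>j. f j \<omega>) S) \<in> borel_measurable M"
proof -
  have "(\<lambda>\<omega>. infsum (\<lambda>j. f j \<omega>) S) = (\<lambda>\<omega>. enn2real (\<Sum>j. ennreal (if j \<in> S then f j \<omega> else 0)))"
    using nn by (intro ext infsum_nn_enn) auto
  also have "\<dots> \<in> borel_measurable M" by measurable
  finally show ?thesis .
qed

lemma infsum_le_bound_nn:
  fixes f :: "'b \<Rightarrow> real"
  assumes "\<And>F. finite F \<Longrightarrow> F \<subseteq> S \<Longrightarrow> sum f F \<le> b" "0 \<le> b"
  shows "infsum f S \<le> b"
proof (cases "f summable_on S")
  case True then show ?thesis using assms by (intro infsum_le_finite_sums) auto
next
  case False then show ?thesis using assms by (simp add: infsum_not_exists)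
qed

lemma nn_summable_bound:
  fixes f :: "'b \<Rightarrow> real"
  assumes "\<And>F. finite F \<Longrightarrow> F \<subseteq> S \<Longrightarrow> sum f F \<le> b" "\<And>j. j \<in> S \<Longrightarrow> 0 \<le> f j"
  shows "f summable_on S"
  using assms by (intro nonneg_bdd_above_summable_on) (auto simp: bdd_above_def)


lemma sum_le_enn2real:
  fixes g :: "nat \<Rightarrow> real"
  assumes g0: "\<And>j. 0 \<le> g j" and nt: "(\<Sum>j. ennreal (g j)) \<noteq> top" and F: "finite F"
  shows "sum g F \<le> enn2real (\<Sum>j. ennreal (g j))"
proof -
  have "ennreal (sum g F) = (\<Sum>j\<in>F. ennreal (g j))" using g0 by (simp add: sum_ennreal)
  also have "\<dots> \<le> (\<Sum>j. ennreal (g j))" by (rule sum_le_suminf) (auto simp: F)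
  finally have "ennreal (sum g F) \<le> (\<Sum>j. ennreal (g j))" .
  then have "enn2real (ennreal (sum g F)) \<le> enn2real (\<Sum>j. ennreal (g j))"
    using nt by (intro enn2real_mono) (auto simp: top.not_eq_extremum)
  then show ?thesis using g0 by (simp add: sum_nonneg)
qed

lemma markov_measure:
  fixes X :: "'a \<Rightarrow> ennreal"
  assumes P: "prob_space M" and [measurable]: "X \<in> borel_measurable M" and c: "0 < c"
    and I: "(\<integral>\<^sup>+\<omega>. X \<omega> \<partial>M) \<le> ennreal B" and B: "0 \<le> B"
  shows "measure M {\<omega>\<in>space M. ennreal c \<le> X \<omega>} \<le> B / c"
proof -
  interpret prob_space M by (rule P)
  define S where "S = {\<omega>\<in>space M. ennreal c \<le> X \<omega>}"
  have S[measurable]: "S \<in> sets M" unfolding S_def by measurable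
  have "ennreal c * emeasure M S = (\<integral>\<^sup>+\<omega>. ennreal c * indicator S \<omega> \<partial>M)"
    by (simp add: nn_integral_cmult_indicator)
  also have "\<dots> \<le> (\<integral>\<^sup>+\<omega>. X \<omega> \<partial>M)"
    by (intro nn_integral_mono) (auto simp: S_def indicator_def)
  also have "\<dots> \<le> ennreal B" by (rule I)
  finally have "ennreal c * ennreal (measure M S) \<le> ennreal B"
    by (simp add: emeasure_eq_measure)
  then have "ennreal (c * measure M S) \<le> ennreal B" using c by (simp add: ennreal_mult)
  then have "c * measure M S \<le> B" using B by (simp add: ennreal_le_iff)
  then show ?thesis using c unfolding S_def by (simp add: field_simps)
qed

lemma tail_tendsto0:
  fixes g :: "nat \<Rightarrow> real"
  assumes g0: "\<And>j. 0 \<le> g j" and sg: "summable g"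
  shows "(\<lambda>N. \<Sum>j. if N < j then g j else 0) \<longlonglongrightarrow> 0"
proof -
  have eq: "(\<Sum>j. if N < j then g j else 0) = suminf g - (\<Sum>j<Suc N. g j)" for N
  proof -
    have s2: "summable (\<lambda>j. if j < Suc N then g j else 0)"
      by (rule summable_finite[of "{..<Suc N}"]) auto
    have "(\<lambda>j. if N < j then g j else 0) = (\<lambda>j. g j - (if j < Suc N then g j else 0))" by auto
    then have "(\<Sum>j. if N < j then g j else 0) = suminf g - (\<Sum>j. if j < Suc N then g j else 0)"
      using suminf_diff[OF sg s2] by simp
    also have "(\<Sum>j. if j < Suc N then g j else 0) = (\<Sum>j<Suc N. g j)"
      by (subst suminf_finite[of "{..<Suc N}"]) auto
    finally show ?thesis .
  qed
  have "(\<lambda>N. \<Sum>j<Suc N. g j) \<longlonglongrightarrow> suminf g"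
    using summable_LIMSEQ[OF sg] by (rule LIMSEQ_Suc)
  then have "(\<lambda>N. suminf g - (\<Sum>j<Suc N. g j)) \<longlonglongrightarrow> suminf g - suminf g"
    by (intro tendsto_diff tendsto_const)
  then show ?thesis by (simp add: eq)
qed

lemma sum_le_tail:
  fixes g :: "nat \<Rightarrow> real"
  assumes g0: "\<And>j. 0 \<le> g j" and sg: "summable g" and F: "finite F" "\<And>j. j \<in> F \<Longrightarrow> N < j"
  shows "sum g F \<le> (\<Sum>j. if N < j then g j else 0)"
proof -
  have s: "summable (\<lambda>j. if N < j then g j else 0)"
    by (rule summable_comparison_test'[OF sg]) (auto simp: g0)
  have "sum g F = sum (\<lambda>j. if N < j then g j else 0) F" using F by (intro sum.cong) auto
  also have "\<dots> \<le> (\<Sum>j. if N < j then g j else 0)"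
    by (rule sum_le_suminf[OF s F(1)]) (auto simp: g0)
  finally show ?thesis .
qed


locale thm2_setup =
  fixes K :: "'x::{real_inner, banach, second_countable_topology} \<Rightarrow> 'y::{real_inner, banach, second_countable_topology}"
    and \<sigma> :: "nat \<Rightarrow> real" and u :: "nat \<Rightarrow> 'y" and v :: "nat \<Rightarrow> 'x"
    and M :: "'a measure" and Y :: "nat \<Rightarrow> 'a \<Rightarrow> 'y"
    and x_hat :: 'x and y_hat :: 'y
    and q p \<epsilon> \<nu> \<rho> :: real and \<xi> :: 'x and c1 C1 c2 C2 :: real
  assumes K_lin: "bounded_linear K"
    and u_on: "\<And>i j. i \<ge> 1 \<Longrightarrow> j \<ge> 1 \<Longrightarrow> u i \<bullet> u j = (if i = j then 1 else 0)"
    and v_on: "\<And>i j. i \<ge> 1 \<Longrightarrow> j \<ge> 1 \<Longrightarrow> v i \<bullet> v j = (if i = j then 1 else 0)"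
    and \<sigma>_pos: "\<And>j. j \<ge> 1 \<Longrightarrow> \<sigma> j > 0"
    and svd: "\<And>j. j \<ge> 1 \<Longrightarrow> K (v j) = \<sigma> j *\<^sub>R u j"
    and y_hat: "y_hat = K x_hat"
    and M: "prob_space M"
    and Y_rv: "\<And>i. i \<ge> 1 \<Longrightarrow> Y i \<in> borel_measurable M"
    and Y_indep: "prob_space.indep_vars M (\<lambda>_. borel) Y {1..}"
    and Y_id: "\<And>i. i \<ge> 1 \<Longrightarrow> distr M borel (Y i) = distr M borel (Y 1)"
    and Y_int: "integrable M (Y 1)"
    and Y_mean: "prob_space.expectation M (Y 1) = y_hat"
    and Y_var: "integrable M (\<lambda>\<omega>. (norm (Y 1 \<omega> - y_hat))\<^sup>2)"
    and qp: "q > 0" "p > 1" "q > p - 1"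
    and \<epsilon>: "\<epsilon> > 0" "p > 1 + \<epsilon>"
    and \<nu>\<rho>: "\<nu> > 0" "\<rho> > 0"
    and xi: "norm \<xi> \<le> \<rho>"
    and xhs: "((\<lambda>j. (\<sigma> j powr \<nu> * (\<xi> \<bullet> v j)) *\<^sub>R v j) has_sum x_hat) {1..}"
    and \<sigma>c: "0 < c1" "\<And>j. j \<ge> 1 \<Longrightarrow> c1 * real j powr (- q) \<le> (\<sigma> j)\<^sup>2 \<and> (\<sigma> j)\<^sup>2 \<le> C1 * real j powr (- q)"
    and sc: "0 < c2" "\<And>j. j \<ge> 1 \<Longrightarrow>
       c2 * real j powr (- p) \<le> prob_space.expectation M (\<lambda>\<omega>. ((Y 1 \<omega> - y_hat) \<bullet> u j)\<^sup>2) \<and>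
       prob_space.expectation M (\<lambda>\<omega>. ((Y 1 \<omega> - y_hat) \<bullet> u j)\<^sup>2) \<le> C2 * real j powr (- p)"

sublocale thm2_setup \<subseteq> prob_space M by (rule M)

context thm2_setup
begin

lemma id_int:
  fixes g :: "'y \<Rightarrow> real"
  assumes i: "i \<ge> 1" and g[measurable]: "g \<in> borel_measurable borel"
  shows "integrable M (\<lambda>\<omega>. g (Y i \<omega>)) = integrable M (\<lambda>\<omega>. g (Y 1 \<omega>))"
    and "(\<integral>\<omega>. g (Y i \<omega>) \<partial>M) = (\<integral>\<omega>. g (Y 1 \<omega>) \<partial>M)"
proof -
  have Yi: "Y i \<in> measurable M borel" and Y1: "Y 1 \<in> measurable M borel" using Y_rv i by auto
  show "integrable M (\<lambda>\<omega>. g (Y i \<omega>)) = integrable M (\<lambda>\<omega>. g (Y 1 \<omega>))"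
    using integrable_distr_eq[OF Yi g] integrable_distr_eq[OF Y1 g] Y_id[OF i] by metis
  show "(\<integral>\<omega>. g (Y i \<omega>) \<partial>M) = (\<integral>\<omega>. g (Y 1 \<omega>) \<partial>M)"
    using integral_distr[OF Yi g] integral_distr[OF Y1 g] Y_id[OF i] by metis
qed

lemma indep_prod:
  fixes g h :: "'y \<Rightarrow> real"
  assumes il: "i \<ge> 1" "l \<ge> 1" "i \<noteq> l"
    and g[measurable]: "g \<in> borel_measurable borel" and h[measurable]: "h \<in> borel_measurable borel"
    and ig: "integrable M (\<lambda>\<omega>. g (Y i \<omega>))" and ih: "integrable M (\<lambda>\<omega>. h (Y l \<omega>))"
  shows "integrable M (\<lambda>\<omega>. g (Y i \<omega>) * h (Y l \<omega>))"
    and "(\<integral>\<omega>. g (Y i \<omega>) * h (Y l \<omega>) \<partial>M) = (\<integral>\<omega>. g (Y i \<omega>) \<partial>M) * (\<integral>\<omega>. h (Y l \<omega>) \<partial>M)"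
proof -
  define G where "G k = (if k = i then g else h)" for k
  have ind: "indep_vars (\<lambda>_. borel) Y {i, l}"
    by (rule indep_vars_subset[OF Y_indep]) (use il in auto)
  have ind2: "indep_vars (\<lambda>_. borel) (\<lambda>k \<omega>. G k (Y k \<omega>)) {i, l}"
    by (rule indep_vars_compose2[OF ind]) (auto simp: G_def)
  have ints: "\<And>k. k \<in> {i, l} \<Longrightarrow> integrable M (\<lambda>\<omega>. G k (Y k \<omega>))"
    using ig ih il by (auto simp: G_def)
  have pr: "\<And>\<omega>. (\<Prod>k\<in>{i, l}. G k (Y k \<omega>)) = g (Y i \<omega>) * h (Y l \<omega>)"
    using il by (simp add: G_def)
  show "integrable M (\<lambda>\<omega>. g (Y i \<omega>) * h (Y l \<omega>))"
    using indep_vars_integrable[OF _ ind2 ints] pr by simp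
  show "(\<integral>\<omega>. g (Y i \<omega>) * h (Y l \<omega>) \<partial>M) = (\<integral>\<omega>. g (Y i \<omega>) \<partial>M) * (\<integral>\<omega>. h (Y l \<omega>) \<partial>M)"
    using indep_vars_lebesgue_integral[OF _ ind2 ints] pr il by (simp add: G_def)
qed

lemma sumsq:
  fixes g :: "'y \<Rightarrow> real"
  assumes g[measurable]: "g \<in> borel_measurable borel"
    and ig: "integrable M (\<lambda>\<omega>. g (Y 1 \<omega>))" and ig2: "integrable M (\<lambda>\<omega>. (g (Y 1 \<omega>))\<^sup>2)"
    and m0: "(\<integral>\<omega>. g (Y 1 \<omega>) \<partial>M) = 0"
  shows "integrable M (\<lambda>\<omega>. (\<Sum>i=1..n. g (Y i \<omega>))\<^sup>2)"
    and "(\<integral>\<omega>. (\<Sum>i=1..n. g (Y i \<omega>))\<^sup>2 \<partial>M) = real n * (\<integral>\<omega>. (g (Y 1 \<omega>))\<^sup>2 \<partial>M)"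
proof -
  have g2[measurable]: "(\<lambda>y. (g y)\<^sup>2) \<in> borel_measurable borel" by measurable
  have gi: "\<And>i. i \<ge> 1 \<Longrightarrow> integrable M (\<lambda>\<omega>. g (Y i \<omega>))"
    using id_int(1)[OF _ g] ig by blast
  have g2i: "\<And>i. i \<ge> 1 \<Longrightarrow> integrable M (\<lambda>\<omega>. (g (Y i \<omega>))\<^sup>2)"
    using id_int(1)[OF _ g2] ig2 by blast
  have gm: "\<And>i. i \<ge> 1 \<Longrightarrow> (\<integral>\<omega>. g (Y i \<omega>) \<partial>M) = 0"
    by (rule trans[OF id_int(2)[OF _ g] m0])
  have g2m: "\<And>i. i \<ge> 1 \<Longrightarrow> (\<integral>\<omega>. (g (Y i \<omega>))\<^sup>2 \<partial>M) = (\<integral>\<omega>. (g (Y 1 \<omega>))\<^sup>2 \<partial>M)"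
    using id_int(2)[OF _ g2] by blast
  have expand: "\<And>\<omega>. (\<Sum>i=1..n. g (Y i \<omega>))\<^sup>2 = (\<Sum>i=1..n. \<Sum>l=1..n. g (Y i \<omega>) * g (Y l \<omega>))"
    by (simp add: power2_eq_square sum_product)
  have tint: "integrable M (\<lambda>\<omega>. g (Y i \<omega>) * g (Y l \<omega>))" if "i \<in> {1..n}" "l \<in> {1..n}" for i l
  proof (cases "i = l")
    case True then show ?thesis using g2i[of i] that by (simp add: power2_eq_square)
  next
    case False then show ?thesis using indep_prod(1)[OF _ _ False g g gi gi] that by auto
  qed
  have tval: "(\<integral>\<omega>. g (Y i \<omega>) * g (Y l \<omega>) \<partial>M) = (if i = l then (\<integral>\<omega>. (g (Y 1 \<omega>))\<^sup>2 \<partial>M) else 0)"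
    if "i \<in> {1..n}" "l \<in> {1..n}" for i l
  proof (cases "i = l")
    case True then show ?thesis using g2m[of i] that by (simp add: power2_eq_square)
  next
    case False then show ?thesis using indep_prod(2)[OF _ _ False g g gi gi] that gm by auto
  qed
  show "integrable M (\<lambda>\<omega>. (\<Sum>i=1..n. g (Y i \<omega>))\<^sup>2)"
    unfolding expand by (intro Bochner_Integration.integrable_sum) (use tint in auto)
  have "(\<integral>\<omega>. (\<Sum>i=1..n. g (Y i \<omega>))\<^sup>2 \<partial>M) = (\<Sum>i=1..n. (\<integral>\<omega>. (\<Sum>l=1..n. g (Y i \<omega>) * g (Y l \<omega>)) \<partial>M))"
    unfolding expand by (rule Bochner_Integration.integral_sum) (use tint in \<open>auto intro!: Bochner_Integration.integrable_sum\<close>)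
  also have "\<dots> = (\<Sum>i=1..n. \<Sum>l=1..n. (\<integral>\<omega>. g (Y i \<omega>) * g (Y l \<omega>) \<partial>M))"
    by (intro sum.cong refl Bochner_Integration.integral_sum) (use tint in auto)
  also have "\<dots> = (\<Sum>i=1..n. \<Sum>l=1..n. (if i = l then (\<integral>\<omega>. (g (Y 1 \<omega>))\<^sup>2 \<partial>M) else 0))"
    using tval by (intro sum.cong refl) auto
  also have "\<dots> = real n * (\<integral>\<omega>. (g (Y 1 \<omega>))\<^sup>2 \<partial>M)" by simp
  finally show "(\<integral>\<omega>. (\<Sum>i=1..n. g (Y i \<omega>))\<^sup>2 \<partial>M) = real n * (\<integral>\<omega>. (g (Y 1 \<omega>))\<^sup>2 \<partial>M)" .
qed

end

context thm2_setup
begin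

definition Z :: "nat \<Rightarrow> nat \<Rightarrow> 'a \<Rightarrow> real" where
  "Z i j \<omega> = (Y i \<omega> - y_hat) \<bullet> u j"

definition Nn :: "nat \<Rightarrow> nat \<Rightarrow> 'a \<Rightarrow> real" where
  "Nn n j \<omega> = (1 / real n) * (\<Sum>i=1..n. Z i j \<omega>)"

definition s2 :: "nat \<Rightarrow> real" where
  "s2 j = expectation (\<lambda>\<omega>. (Z 1 j \<omega>)\<^sup>2)"

lemma g_meas[measurable]: "(\<lambda>y. (y - y_hat) \<bullet> u j) \<in> borel_measurable borel"
  by measurable

lemma Z_meas: "i \<ge> 1 \<Longrightarrow> (\<lambda>\<omega>. Z i j \<omega>) \<in> borel_measurable M"
  unfolding Z_def using Y_rv by measurable

lemma Nn_meas: "(\<lambda>\<omega>. Nn n j \<omega>) \<in> borel_measurable M"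
  unfolding Nn_def by (intro borel_measurable_times borel_measurable_const borel_measurable_sum Z_meas) auto

lemma u_norm: "j \<ge> 1 \<Longrightarrow> norm (u j) = 1"
  using u_on[of j j] by (simp add: norm_eq_sqrt_inner)

lemma Yc_int: "integrable M (\<lambda>\<omega>. Y 1 \<omega> - y_hat)"
  using Y_int by (intro Bochner_Integration.integrable_diff) auto

lemma Z_bound: "j \<ge> 1 \<Longrightarrow> \<bar>(y - y_hat) \<bullet> u j\<bar> \<le> norm (y - y_hat)"
  using Cauchy_Schwarz_ineq2[of "y - y_hat" "u j"] u_norm by simp

lemma Z1_int: "j \<ge> 1 \<Longrightarrow> integrable M (\<lambda>\<omega>. (Y 1 \<omega> - y_hat) \<bullet> u j)"
  using Yc_int by (intro integrable_inner_left) auto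

lemma Z1sq_int: "j \<ge> 1 \<Longrightarrow> integrable M (\<lambda>\<omega>. ((Y 1 \<omega> - y_hat) \<bullet> u j)\<^sup>2)"
proof -
  assume j: "j \<ge> 1"
  have [measurable]: "Y 1 \<in> borel_measurable M" using Y_rv by auto
  show ?thesis
  proof (rule Bochner_Integration.integrable_bound[OF Y_var])
    show "(\<lambda>\<omega>. ((Y 1 \<omega> - y_hat) \<bullet> u j)\<^sup>2) \<in> borel_measurable M" by measurable
    show "AE \<omega> in M. norm (((Y 1 \<omega> - y_hat) \<bullet> u j)\<^sup>2) \<le> norm ((norm (Y 1 \<omega> - y_hat))\<^sup>2)"
    proof (intro AE_I2)
      fix \<omega>
      have "((Y 1 \<omega> - y_hat) \<bullet> u j)\<^sup>2 \<le> (norm (Y 1 \<omega> - y_hat))\<^sup>2"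
        using Z_bound[OF j, of "Y 1 \<omega>"] by (metis abs_le_square_iff abs_norm_cancel)
      then show "norm (((Y 1 \<omega> - y_hat) \<bullet> u j)\<^sup>2) \<le> norm ((norm (Y 1 \<omega> - y_hat))\<^sup>2)" by simp
    qed
  qed
qed

lemma Z1_mean: "j \<ge> 1 \<Longrightarrow> expectation (\<lambda>\<omega>. (Y 1 \<omega> - y_hat) \<bullet> u j) = 0"
proof -
  assume j: "j \<ge> 1"
  have "expectation (\<lambda>\<omega>. (Y 1 \<omega> - y_hat) \<bullet> u j) = expectation (\<lambda>\<omega>. Y 1 \<omega> - y_hat) \<bullet> u j"
    using Yc_int by (simp)
  also have "expectation (\<lambda>\<omega>. Y 1 \<omega> - y_hat) = 0"
    using Y_int Y_mean by (simp add: prob_space)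
  finally show ?thesis by simp
qed

lemma s2_def': "s2 j = expectation (\<lambda>\<omega>. ((Y 1 \<omega> - y_hat) \<bullet> u j)\<^sup>2)"
  by (simp add: s2_def Z_def)

lemma s2_nonneg: "0 \<le> s2 j"
  unfolding s2_def by simp

lemma Nn_eq: "n \<ge> 1 \<Longrightarrow> Nn n j \<omega> = (1 / real n) * (\<Sum>i=1..n. (\<lambda>y. (y - y_hat) \<bullet> u j) (Y i \<omega>))"
  by (simp add: Nn_def Z_def)

lemma Nn_sq: assumes n: "n \<ge> 1" and j: "j \<ge> 1"
  shows "integrable M (\<lambda>\<omega>. (Nn n j \<omega>)\<^sup>2)" and "expectation (\<lambda>\<omega>. (Nn n j \<omega>)\<^sup>2) = s2 j / real n"
proof -
  note S = sumsq[OF g_meas Z1_int[OF j] Z1sq_int[OF j] Z1_mean[OF j], of n]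
  have eq: "(\<lambda>\<omega>. (Nn n j \<omega>)\<^sup>2) = (\<lambda>\<omega>. (1 / real n)\<^sup>2 * (\<Sum>i=1..n. (Y i \<omega> - y_hat) \<bullet> u j)\<^sup>2)"
    by (simp add: Nn_def Z_def power_divide)
  show "integrable M (\<lambda>\<omega>. (Nn n j \<omega>)\<^sup>2)" unfolding eq using S(1) by simp
  show "expectation (\<lambda>\<omega>. (Nn n j \<omega>)\<^sup>2) = s2 j / real n"
    unfolding eq using S(2) n by (simp add: s2_def' power2_eq_square field_simps)
qed

lemma Zsq_int: assumes i: "i \<ge> 1" and j: "j \<ge> 1"
  shows "integrable M (\<lambda>\<omega>. (Z i j \<omega>)\<^sup>2)" and "expectation (\<lambda>\<omega>. (Z i j \<omega>)\<^sup>2) = s2 j"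
proof -
  have g2: "(\<lambda>y. ((y - y_hat) \<bullet> u j)\<^sup>2) \<in> borel_measurable borel" by measurable
  show "integrable M (\<lambda>\<omega>. (Z i j \<omega>)\<^sup>2)"
    using id_int(1)[OF i g2] Z1sq_int[OF j] by (simp add: Z_def)
  show "expectation (\<lambda>\<omega>. (Z i j \<omega>)\<^sup>2) = s2 j"
    using id_int(2)[OF i g2] by (simp add: Z_def s2_def')
qed

lemma ybar_inner: "n \<ge> 1 \<Longrightarrow> ybar Y n \<omega> \<bullet> u j = y_hat \<bullet> u j + Nn n j \<omega>"
  by (simp add: ybar_def Nn_def Z_def inner_sum_left inner_diff_left sum_subtractf field_simps)

lemma resid_inner: "n \<ge> 1 \<Longrightarrow> (Y i \<omega> - ybar Y n \<omega>) \<bullet> u j = Z i j \<omega> - Nn n j \<omega>"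
  using ybar_inner[of n \<omega> j] by (simp add: Z_def inner_diff_left)

definition d :: "nat \<Rightarrow> real" where "d j = real j powr ((p - 1 - \<epsilon>) / 2)"
definition ac :: "nat \<Rightarrow> real" where "ac j = \<sigma> j powr \<nu> * (\<xi> \<bullet> v j)"

lemma d2: "(d j)\<^sup>2 = real j powr (p - 1 - \<epsilon>)"
  unfolding d_def power2_eq_square by (simp add: powr_add[symmetric])

lemma yhat_coef: assumes j: "j \<ge> 1" shows "y_hat \<bullet> u j = \<sigma> j * ac j"
proof -
  have bl: "bounded_linear (\<lambda>x. K x \<bullet> u j)"
    by (rule bounded_linear_compose[OF bounded_linear_inner_left K_lin])
  have xh: "((\<lambda>i. ac i *\<^sub>R v i) has_sum x_hat) {1..}" using xhs by (simp add: ac_def)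
  have h1: "((\<lambda>i. K (ac i *\<^sub>R v i) \<bullet> u j) has_sum (K x_hat \<bullet> u j)) {1..}"
    by (rule has_sum_bounded_linear[OF bl xh])
  have eqf: "K (ac i *\<^sub>R v i) \<bullet> u j = (if i = j then \<sigma> j * ac j else 0)" if "i \<in> {1..}" for i
  proof -
    have "K (ac i *\<^sub>R v i) = ac i *\<^sub>R K (v i)" using K_lin by (simp add: linear_simps)
    then show ?thesis using that j svd[of i] u_on[of i j] by auto
  qed
  have h2: "((\<lambda>i. if i = j then \<sigma> j * ac j else 0) has_sum (\<sigma> j * ac j)) {1..}"
  proof -
    have "((\<lambda>i. if i = j then \<sigma> j * ac j else 0) has_sum (\<sigma> j * ac j)) {j}" by (rule has_sum_finiteI) auto
    then show ?thesis by (subst (asm) has_sum_cong_neutral[where T="{1..}"]) (use j in auto)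
  qed
  have "((\<lambda>i. K (ac i *\<^sub>R v i) \<bullet> u j) has_sum (\<sigma> j * ac j)) {1..}"
    using h2 by (subst has_sum_cong[where g="\<lambda>i. if i = j then \<sigma> j * ac j else 0"]) (auto simp: eqf)
  with h1 have "K x_hat \<bullet> u j = \<sigma> j * ac j" using has_sum_unique by blast
  then show ?thesis by (simp add: y_hat)
qed

lemma err_bound:
  assumes n: "n \<ge> 1"
    and B: "\<And>F. finite F \<Longrightarrow> F \<subseteq> {k+1..} \<Longrightarrow> (\<Sum>j\<in>F. (ac j)\<^sup>2) \<le> B"
  shows "norm (xbar \<sigma> u v (ybar Y n \<omega>) k - x_hat) \<le> sqrt (\<Sum>j=1..k. (Nn n j \<omega> / \<sigma> j)\<^sup>2) + sqrt B"
proof -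
  define f where "f j = ac j *\<^sub>R v j" for j
  have xh: "(f has_sum x_hat) {1..}" using xhs by (simp add: ac_def f_def[abs_def])
  have sk: "f summable_on {k+1..}"
    by (rule summable_on_subset_banach[OF has_sum_imp_summable[OF xh]]) auto
  define R where "R = infsum f {k+1..}"
  have hR: "(f has_sum R) {k+1..}" using sk by (simp add: R_def)
  have hF: "(f has_sum (\<Sum>j=1..k. f j)) {1..k}" by (rule has_sum_finite) simp
  have "(f has_sum ((\<Sum>j=1..k. f j) + R)) ({1..k} \<union> {k+1..})"
    by (rule has_sum_Un_disjoint[OF hF hR]) auto
  moreover have "{1..k} \<union> {k+1..} = {1::nat..}" by auto
  ultimately have xeq: "x_hat = (\<Sum>j=1..k. f j) + R" using xh has_sum_unique by metis
  have xb: "xbar \<sigma> u v (ybar Y n \<omega>) k = (\<Sum>j=1..k. f j) + (\<Sum>j=1..k. (Nn n j \<omega> / \<sigma> j) *\<^sub>R v j)"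
  proof -
    have "xbar \<sigma> u v (ybar Y n \<omega>) k = (\<Sum>j=1..k. (ac j + Nn n j \<omega> / \<sigma> j) *\<^sub>R v j)"
      unfolding xbar_def
    proof (intro sum.cong refl)
      fix j assume "j \<in> {1..k}"
      then have j: "j \<ge> 1" by auto
      have "ybar Y n \<omega> \<bullet> u j / \<sigma> j = ac j + Nn n j \<omega> / \<sigma> j"
        using ybar_inner[OF n] yhat_coef[OF j] \<sigma>_pos[OF j] by (simp add: field_simps)
      then show "(ybar Y n \<omega> \<bullet> u j / \<sigma> j) *\<^sub>R v j = (ac j + Nn n j \<omega> / \<sigma> j) *\<^sub>R v j" by simp
    qed
    also have "\<dots> = (\<Sum>j=1..k. f j) + (\<Sum>j=1..k. (Nn n j \<omega> / \<sigma> j) *\<^sub>R v j)"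
      by (simp add: f_def scaleR_add_left sum.distrib)
    finally show ?thesis .
  qed
  have "norm (xbar \<sigma> u v (ybar Y n \<omega>) k - x_hat) = norm ((\<Sum>j=1..k. (Nn n j \<omega> / \<sigma> j) *\<^sub>R v j) - R)"
    by (simp add: xb xeq)
  also have "\<dots> \<le> norm (\<Sum>j=1..k. (Nn n j \<omega> / \<sigma> j) *\<^sub>R v j) + norm R" by (rule norm_triangle_ineq4)
  also have "norm (\<Sum>j=1..k. (Nn n j \<omega> / \<sigma> j) *\<^sub>R v j) = sqrt (\<Sum>j=1..k. (Nn n j \<omega> / \<sigma> j)\<^sup>2)"
    by (rule orth_norm[OF v_on]) auto
  also have "norm R \<le> sqrt B"
    by (rule has_sum_orth_norm_le[OF v_on _ hR[unfolded f_def] B]) auto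
  finally show ?thesis by simp
qed

definition bb :: real where "bb = q + 1 + \<epsilon> - p"
definition aa :: real where "aa = q * \<nu> + bb"

lemma bb_pos: "bb > 0" using qp \<epsilon> by (simp add: bb_def)
lemma aa_pos: "aa > 0"
proof -
  have "q * \<nu> > 0" using qp \<nu>\<rho> by simp
  then show ?thesis using bb_pos by (simp add: aa_def)
qed

lemma C1_pos: "C1 > 0"
proof -
  have "0 < (\<sigma> 1)\<^sup>2" using \<sigma>_pos[of 1] by simp
  also have "\<dots> \<le> C1 * real 1 powr (- q)" using \<sigma>c(2)[of 1] by simp
  finally show ?thesis by simp
qed

lemma sig_powr_sq: assumes j: "j \<ge> 1" shows "(\<sigma> j powr \<nu>)\<^sup>2 = ((\<sigma> j)\<^sup>2) powr \<nu>"
  using \<sigma>_pos[OF j] by (simp add: power2_eq_square powr_mult)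

lemma ac_up: assumes j: "j \<ge> 1"
  shows "(ac j)\<^sup>2 \<le> C1 powr \<nu> * real j powr (- q * \<nu>) * (\<xi> \<bullet> v j)\<^sup>2"
proof -
  have "(ac j)\<^sup>2 = ((\<sigma> j)\<^sup>2) powr \<nu> * (\<xi> \<bullet> v j)\<^sup>2"
    by (simp add: ac_def power_mult_distrib sig_powr_sq[OF j])
  also have "((\<sigma> j)\<^sup>2) powr \<nu> \<le> (C1 * real j powr (- q)) powr \<nu>"
    using \<sigma>c(2)[OF j] \<nu>\<rho> by (intro powr_mono2) auto
  also have "(C1 * real j powr (- q)) powr \<nu> = C1 powr \<nu> * real j powr (- q * \<nu>)"
    using C1_pos by (simp add: powr_mult powr_powr)
  finally show ?thesis by (simp add: mult_right_mono)
qed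

lemma yh_term: assumes j: "j \<ge> 1"
  shows "(d j)\<^sup>2 * (y_hat \<bullet> u j)\<^sup>2 = real j powr (p - 1 - \<epsilon>) * (\<sigma> j)\<^sup>2 * (ac j)\<^sup>2"
  by (simp add: d2 yhat_coef[OF j] power_mult_distrib)

lemma yh_up: assumes j: "j \<ge> 1"
  shows "(d j)\<^sup>2 * (y_hat \<bullet> u j)\<^sup>2 \<le> C1 powr (1 + \<nu>) * real j powr (- aa) * (\<xi> \<bullet> v j)\<^sup>2"
proof -
  have jp: "0 < real j" using j by simp
  have "(d j)\<^sup>2 * (y_hat \<bullet> u j)\<^sup>2 = real j powr (p - 1 - \<epsilon>) * (\<sigma> j)\<^sup>2 * (ac j)\<^sup>2" by (rule yh_term[OF j])
  also have "\<dots> \<le> real j powr (p - 1 - \<epsilon>) * (C1 * real j powr (- q)) * (C1 powr \<nu> * real j powr (- q * \<nu>) * (\<xi> \<bullet> v j)\<^sup>2)"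
    using \<sigma>c(2)[OF j] ac_up[OF j] C1_pos by (intro mult_mono) auto
  also have "\<dots> = C1 powr (1 + \<nu>) * (real j powr (p - 1 - \<epsilon>) * real j powr (- q) * real j powr (- q * \<nu>)) * (\<xi> \<bullet> v j)\<^sup>2"
    using C1_pos by (simp add: powr_add)
  also have "real j powr (p - 1 - \<epsilon>) * real j powr (- q) * real j powr (- q * \<nu>) = real j powr (- aa)"
    by (simp add: powr_add[symmetric] aa_def bb_def algebra_simps)
  finally show ?thesis by simp
qed

lemma yh_low: assumes j: "j \<ge> 1"
  shows "c1 * real j powr (- bb) * (ac j)\<^sup>2 \<le> (d j)\<^sup>2 * (y_hat \<bullet> u j)\<^sup>2"
proof -
  have "c1 * real j powr (- bb) * (ac j)\<^sup>2 = real j powr (p - 1 - \<epsilon>) * (c1 * real j powr (- q)) * (ac j)\<^sup>2"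
    by (simp add: powr_add[symmetric] bb_def algebra_simps)
  also have "\<dots> \<le> real j powr (p - 1 - \<epsilon>) * (\<sigma> j)\<^sup>2 * (ac j)\<^sup>2"
    using \<sigma>c(2)[OF j] by (intro mult_right_mono mult_left_mono) auto
  also have "\<dots> = (d j)\<^sup>2 * (y_hat \<bullet> u j)\<^sup>2" by (rule yh_term[OF j, symmetric])
  finally show ?thesis .
qed

lemma var_identity:
  fixes z :: "nat \<Rightarrow> real"
  assumes n: "n \<ge> 1"
  shows "(\<Sum>i=1..n. (z i - (1 / real n) * (\<Sum>l=1..n. z l))\<^sup>2)
         = (\<Sum>i=1..n. (z i)\<^sup>2) - real n * ((1 / real n) * (\<Sum>l=1..n. z l))\<^sup>2"
proof -
  define N where "N = (1 / real n) * (\<Sum>l=1..n. z l)"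
  have sN: "(\<Sum>l=1..n. z l) = real n * N" using n by (auto simp: N_def field_simps)
  have "(\<Sum>i=1..n. (z i - N)\<^sup>2) = (\<Sum>i=1..n. (z i)\<^sup>2 - 2 * N * z i + N\<^sup>2)"
    by (intro sum.cong refl) (simp add: power2_eq_square algebra_simps)
  also have "\<dots> = (\<Sum>i=1..n. (z i)\<^sup>2) - 2 * N * (\<Sum>i=1..n. z i) + real n * N\<^sup>2"
    by (simp add: sum.distrib sum_subtractf sum_distrib_left)
  also have "\<dots> = (\<Sum>i=1..n. (z i)\<^sup>2) - real n * N\<^sup>2"
    unfolding sN by (simp add: power2_eq_square algebra_simps)
  finally show ?thesis by (simp add: N_def)
qed

definition Bs :: "nat \<Rightarrow> 'a \<Rightarrow> ennreal" where "Bs i \<omega> = (\<Sum>j. ennreal ((d j)\<^sup>2 * (Z i j \<omega>)\<^sup>2))"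
definition Ae :: "nat \<Rightarrow> 'a \<Rightarrow> ennreal" where "Ae n \<omega> = (\<Sum>j. ennreal ((d j)\<^sup>2 * (Nn n j \<omega>)\<^sup>2))"
definition At :: "nat \<Rightarrow> nat \<Rightarrow> 'a \<Rightarrow> ennreal" where
  "At n k \<omega> = (\<Sum>j. ennreal (if k < j then (d j)\<^sup>2 * (Nn n j \<omega>)\<^sup>2 else 0))"
definition Dl :: "nat \<Rightarrow> nat \<Rightarrow> 'a \<Rightarrow> real" where
  "Dl n i \<omega> = infsum (\<lambda>j. (d j)\<^sup>2 * ((Y i \<omega> - ybar Y n \<omega>) \<bullet> u j)\<^sup>2) {1..}"

lemma d1: "d 1 = 1" by (simp add: d_def)

lemma sq_diff_le: "((x::real) - y)\<^sup>2 \<le> 2 * x\<^sup>2 + 2 * y\<^sup>2"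
  using zero_le_power2[of "x + y"] by (simp add: power2_eq_square algebra_simps)

lemma sq_add_le: "((x::real) + y)\<^sup>2 \<le> 2 * x\<^sup>2 + 2 * y\<^sup>2"
  using sq_diff_le[of x "-y"] by simp

lemma Dl_bounds:
  assumes n: "n \<ge> 1" and fb: "Bs i \<omega> \<noteq> top" and fa: "Ae n \<omega> \<noteq> top"
  shows "Dl n i \<omega> \<le> 2 * enn2real (Bs i \<omega>) + 2 * enn2real (Ae n \<omega>)"
    and "(Z i 1 \<omega> - Nn n 1 \<omega>)\<^sup>2 \<le> Dl n i \<omega>"
proof -
  define f where "f j = (d j)\<^sup>2 * ((Y i \<omega> - ybar Y n \<omega>) \<bullet> u j)\<^sup>2" for j
  have f_eq: "f j = (d j)\<^sup>2 * (Z i j \<omega> - Nn n j \<omega>)\<^sup>2" for j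
    by (simp add: f_def resid_inner[OF n])
  have f0: "0 \<le> f j" for j by (simp add: f_def)
  have fin: "sum f F \<le> 2 * enn2real (Bs i \<omega>) + 2 * enn2real (Ae n \<omega>)" if F: "finite F" for F
  proof -
    have "sum f F \<le> (\<Sum>j\<in>F. 2 * ((d j)\<^sup>2 * (Z i j \<omega>)\<^sup>2) + 2 * ((d j)\<^sup>2 * (Nn n j \<omega>)\<^sup>2))"
    proof (intro sum_mono)
      fix j
      have "(d j)\<^sup>2 * (Z i j \<omega> - Nn n j \<omega>)\<^sup>2 \<le> (d j)\<^sup>2 * (2 * (Z i j \<omega>)\<^sup>2 + 2 * (Nn n j \<omega>)\<^sup>2)"
        by (intro mult_left_mono sq_diff_le) auto
      then show "f j \<le> 2 * ((d j)\<^sup>2 * (Z i j \<omega>)\<^sup>2) + 2 * ((d j)\<^sup>2 * (Nn n j \<omega>)\<^sup>2)"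
        by (simp add: f_eq algebra_simps)
    qed
    also have "\<dots> = 2 * (\<Sum>j\<in>F. (d j)\<^sup>2 * (Z i j \<omega>)\<^sup>2) + 2 * (\<Sum>j\<in>F. (d j)\<^sup>2 * (Nn n j \<omega>)\<^sup>2)"
      by (simp add: sum.distrib sum_distrib_left)
    also have "\<dots> \<le> 2 * enn2real (Bs i \<omega>) + 2 * enn2real (Ae n \<omega>)"
    proof -
      have b1: "(\<Sum>j\<in>F. (d j)\<^sup>2 * (Z i j \<omega>)\<^sup>2) \<le> enn2real (Bs i \<omega>)"
        unfolding Bs_def by (rule sum_le_enn2real) (use fb F in \<open>auto simp: Bs_def\<close>)
      have b2: "(\<Sum>j\<in>F. (d j)\<^sup>2 * (Nn n j \<omega>)\<^sup>2) \<le> enn2real (Ae n \<omega>)"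
        unfolding Ae_def by (rule sum_le_enn2real) (use fa F in \<open>auto simp: Ae_def\<close>)
      from b1 b2 show ?thesis by linarith
    qed
    finally show ?thesis .
  qed
  have sf: "f summable_on {1..}" by (rule nn_summable_bound[OF fin f0])
  show "Dl n i \<omega> \<le> 2 * enn2real (Bs i \<omega>) + 2 * enn2real (Ae n \<omega>)"
    unfolding Dl_def f_def[symmetric] by (rule infsum_le_bound_nn[OF fin]) auto
  have "sum f {1} \<le> infsum f {1..}" by (rule finite_sum_le_infsum[OF sf]) (auto simp: f0)
  moreover have "Dl n i \<omega> = infsum f {1..}" by (simp add: Dl_def f_def[abs_def])
  moreover have "sum f {1} = (Z i 1 \<omega> - Nn n 1 \<omega>)\<^sup>2" using d1 by (simp add: f_eq)
  ultimately show "(Z i 1 \<omega> - Nn n 1 \<omega>)\<^sup>2 \<le> Dl n i \<omega>" by simp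
qed

lemma delta'_eq: "delta' d u Y n \<omega> = (1 / sqrt (real n)) * sqrt (1 / (real n - 1) * (\<Sum>i=1..n. Dl n i \<omega>))"
  by (simp add: delta'_def Dl_def)

definition Y0 :: real where "Y0 = C1 powr (1 + \<nu>) * (norm \<xi>)\<^sup>2"

lemma yh_sum_le: assumes F: "finite F" "F \<subseteq> {1..}"
  shows "(\<Sum>j\<in>F. (d j)\<^sup>2 * (y_hat \<bullet> u j)\<^sup>2) \<le> Y0"
proof -
  have "(\<Sum>j\<in>F. (d j)\<^sup>2 * (y_hat \<bullet> u j)\<^sup>2) \<le> (\<Sum>j\<in>F. C1 powr (1 + \<nu>) * (\<xi> \<bullet> v j)\<^sup>2)"
  proof (intro sum_mono)
    fix j assume "j \<in> F" then have j: "j \<ge> 1" using F by auto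
    have "real j powr (- aa) \<le> real 1 powr (- aa)" using j aa_pos by (intro powr_mono2') auto
    then have "real j powr (- aa) \<le> 1" by simp
    then have "C1 powr (1 + \<nu>) * real j powr (- aa) * (\<xi> \<bullet> v j)\<^sup>2 \<le> C1 powr (1 + \<nu>) * 1 * (\<xi> \<bullet> v j)\<^sup>2"
      by (intro mult_right_mono mult_left_mono) auto
    then show "(d j)\<^sup>2 * (y_hat \<bullet> u j)\<^sup>2 \<le> C1 powr (1 + \<nu>) * (\<xi> \<bullet> v j)\<^sup>2" using yh_up[OF j] by simp
  qed
  also have "\<dots> \<le> Y0" unfolding Y0_def sum_distrib_left[symmetric]
    by (intro mult_left_mono bessel[OF v_on F]) auto
  finally show ?thesis .
qed

lemma good_omega:
  assumes n: "n \<ge> 2" and T: "T > 0" and mm: "mm > 0"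
    and H1: "(\<Sum>i=1..n. Bs i \<omega>) < ennreal (real n * T)"
    and H2: "Ae n \<omega> < ennreal (T / real n)"
    and H3: "At n k0 \<omega> < ennreal (mm / (16 * real n))"
    and H4: "real n * mm / 2 < (\<Sum>i=1..n. min ((Z i 1 \<omega>)\<^sup>2) 1)"
    and H5: "(Nn n 1 \<omega>)\<^sup>2 < mm / 4"
    and H6: "\<And>F. finite F \<Longrightarrow> F \<subseteq> {k0+1..} \<Longrightarrow> (\<Sum>j\<in>F. (d j)\<^sup>2 * (y_hat \<bullet> u j)\<^sup>2) \<le> mm / (16 * real n)"
  shows "kstop d u Y n \<omega> \<le> k0"
    and "\<And>F. finite F \<Longrightarrow> F \<subseteq> {kstop d u Y n \<omega> + 1..} \<Longrightarrow>
            (\<Sum>j\<in>F. (d j)\<^sup>2 * (y_hat \<bullet> u j)\<^sup>2) \<le> 14 * T / real n"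
proof -
  have n1: "n \<ge> 1" using n by simp
  have rn: "real n \<ge> 2" using n by simp
  have Bfin: "Bs i \<omega> < top" if "i \<in> {1..n}" for i
  proof -
    have "Bs i \<omega> \<le> (\<Sum>i=1..n. Bs i \<omega>)" by (rule member_le_sum) (use that in auto)
    also have "\<dots> < top" using H1 by (simp add: top.not_eq_extremum less_le_trans)
    finally show ?thesis .
  qed
  have Afin: "Ae n \<omega> < top" using H2 by (simp add: top.not_eq_extremum less_le_trans)
  have Atfin: "At n k0 \<omega> < top" using H3 by (simp add: top.not_eq_extremum less_le_trans)
  define ar where "ar = enn2real (Ae n \<omega>)"
  have ar0: "0 \<le> ar" by (simp add: ar_def)
  have arT: "ar \<le> T / real n"
    unfolding ar_def using H2 T by (intro enn2real_leI) auto
  have sumB: "(\<Sum>i=1..n. enn2real (Bs i \<omega>)) \<le> real n * T"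
  proof -
    have "ennreal (\<Sum>i=1..n. enn2real (Bs i \<omega>)) = (\<Sum>i=1..n. ennreal (enn2real (Bs i \<omega>)))"
      by (rule sum_ennreal[symmetric]) auto
    also have "\<dots> = (\<Sum>i=1..n. Bs i \<omega>)" using Bfin by (intro sum.cong refl) auto
    finally have "ennreal (\<Sum>i=1..n. enn2real (Bs i \<omega>)) < ennreal (real n * T)" using H1 by simp
    then show ?thesis by (subst (asm) ennreal_less_iff) (auto intro: sum_nonneg)
  qed
  define SD where "SD = (\<Sum>i=1..n. Dl n i \<omega>)"
  have SDup: "SD \<le> 2 * real n * T + 2 * T"
  proof -
    have "SD \<le> (\<Sum>i=1..n. 2 * enn2real (Bs i \<omega>) + 2 * ar)"
      unfolding SD_def ar_def using Bfin Afin by (intro sum_mono Dl_bounds(1)[OF n1]) (auto simp: less_top[symmetric])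
    also have "\<dots> = 2 * (\<Sum>i=1..n. enn2real (Bs i \<omega>)) + 2 * real n * ar"
      by (simp add: sum.distrib sum_distrib_left)
    also have "\<dots> \<le> 2 * (real n * T) + 2 * real n * (T / real n)"
      using sumB arT rn by (intro add_mono mult_left_mono) auto
    finally show ?thesis using rn by simp
  qed
  have SDlow: "real n * mm / 4 < SD"
  proof -
    have "(\<Sum>i=1..n. (Z i 1 \<omega> - Nn n 1 \<omega>)\<^sup>2) \<le> SD"
      unfolding SD_def using Bfin Afin by (intro sum_mono Dl_bounds(2)[OF n1]) (auto simp: less_top[symmetric])
    moreover have "(\<Sum>i=1..n. (Z i 1 \<omega> - Nn n 1 \<omega>)\<^sup>2) = (\<Sum>i=1..n. (Z i 1 \<omega>)\<^sup>2) - real n * (Nn n 1 \<omega>)\<^sup>2"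
      using var_identity[OF n1, of "\<lambda>i. Z i 1 \<omega>"] by (simp add: Nn_def)
    moreover have "(\<Sum>i=1..n. min ((Z i 1 \<omega>)\<^sup>2) 1) \<le> (\<Sum>i=1..n. (Z i 1 \<omega>)\<^sup>2)"
      by (intro sum_mono) auto
    moreover have "real n * (Nn n 1 \<omega>)\<^sup>2 \<le> real n * (mm / 4)"
      using H5 by (intro mult_left_mono) auto
    ultimately show ?thesis using H4 by linarith
  qed
  define \<delta> where "\<delta> = delta' d u Y n \<omega>"
  have SD0: "0 \<le> SD" using SDlow mm rn by (smt (verit) mult_nonneg_nonneg of_nat_0_le_iff divide_nonneg_nonneg)
  have \<delta>0: "0 \<le> \<delta>" unfolding \<delta>_def delta'_eq using SD0 rn unfolding SD_def
    by (intro mult_nonneg_nonneg real_sqrt_ge_zero) auto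
  have \<delta>sq: "\<delta>\<^sup>2 = SD / (real n * (real n - 1))"
    unfolding \<delta>_def delta'_eq SD_def[symmetric] using SD0 rn
    by (simp add: power_mult_distrib real_sqrt_pow2 field_simps)
  have \<delta>low: "mm / (4 * real n) \<le> \<delta>\<^sup>2"
  proof -
    have "mm / (4 * real n) = (real n * mm / 4) / (real n * real n)" using rn by (simp add: field_simps)
    also have "\<dots> \<le> SD / (real n * real n)" using SDlow rn by (intro divide_right_mono) auto
    also have "\<dots> \<le> SD / (real n * (real n - 1))" using SD0 rn
      by (intro divide_left_mono mult_left_mono mult_pos_pos) auto
    finally show ?thesis using \<delta>sq by simp
  qed
  have \<delta>up: "\<delta>\<^sup>2 \<le> 6 * T / real n"
  proof -
    have "\<delta>\<^sup>2 \<le> (2 * real n * T + 2 * T) / (real n * (real n - 1))"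
      using \<delta>sq SDup rn by (simp add: divide_right_mono)
    also have "\<dots> \<le> 6 * T / real n"
      using rn T by (simp add: field_simps)
    finally show ?thesis .
  qed
  define r where "r j = (d j)\<^sup>2 * (ybar Y n \<omega> \<bullet> u j)\<^sup>2" for j
  have r0: "0 \<le> r j" for j by (simp add: r_def)
  have r_le: "r j \<le> 2 * ((d j)\<^sup>2 * (y_hat \<bullet> u j)\<^sup>2) + 2 * ((d j)\<^sup>2 * (Nn n j \<omega>)\<^sup>2)" for j
  proof -
    have "r j \<le> (d j)\<^sup>2 * (2 * (y_hat \<bullet> u j)\<^sup>2 + 2 * (Nn n j \<omega>)\<^sup>2)"
      unfolding r_def ybar_inner[OF n1] by (intro mult_left_mono sq_add_le) auto
    then show ?thesis by (simp add: algebra_simps)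
  qed
  have yh_le: "(d j)\<^sup>2 * (y_hat \<bullet> u j)\<^sup>2 \<le> 2 * r j + 2 * ((d j)\<^sup>2 * (Nn n j \<omega>)\<^sup>2)" for j
  proof -
    have "(y_hat \<bullet> u j)\<^sup>2 \<le> 2 * (ybar Y n \<omega> \<bullet> u j)\<^sup>2 + 2 * (Nn n j \<omega>)\<^sup>2"
      using sq_diff_le[of "ybar Y n \<omega> \<bullet> u j" "Nn n j \<omega>"] unfolding ybar_inner[OF n1] by simp
    then have "(d j)\<^sup>2 * (y_hat \<bullet> u j)\<^sup>2 \<le> (d j)\<^sup>2 * (2 * (ybar Y n \<omega> \<bullet> u j)\<^sup>2 + 2 * (Nn n j \<omega>)\<^sup>2)"
      by (intro mult_left_mono) auto
    then show ?thesis by (simp add: r_def algebra_simps)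
  qed
  have NF: "(\<Sum>j\<in>F. (d j)\<^sup>2 * (Nn n j \<omega>)\<^sup>2) \<le> ar" if "finite F" for F
    unfolding ar_def Ae_def by (rule sum_le_enn2real) (use Afin that in \<open>auto simp: Ae_def\<close>)
  have rF: "sum r F \<le> 2 * Y0 + 2 * ar" if F: "finite F" "F \<subseteq> {k+1..}" for F k
  proof -
    have "sum r F \<le> (\<Sum>j\<in>F. 2 * ((d j)\<^sup>2 * (y_hat \<bullet> u j)\<^sup>2) + 2 * ((d j)\<^sup>2 * (Nn n j \<omega>)\<^sup>2))"
      by (intro sum_mono r_le)
    also have "\<dots> = 2 * (\<Sum>j\<in>F. (d j)\<^sup>2 * (y_hat \<bullet> u j)\<^sup>2) + 2 * (\<Sum>j\<in>F. (d j)\<^sup>2 * (Nn n j \<omega>)\<^sup>2)"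
      by (simp add: sum.distrib sum_distrib_left)
    also have "\<dots> \<le> 2 * Y0 + 2 * ar"
    proof -
      have F1: "F \<subseteq> {1..}" using F(2) by auto
      show ?thesis using yh_sum_le[OF F(1) F1] NF[OF F(1)] by (intro add_mono) auto
    qed
    finally show ?thesis .
  qed
  have rsum: "r summable_on {k+1..}" for k
    by (rule nn_summable_bound[OF rF]) (auto simp: r0)
  define P where "P k = (sqrt (infsum r {k+1..}) \<le> \<delta>)" for k
  have kst: "kstop d u Y n \<omega> = (LEAST k. P k)"
    unfolding kstop_def P_def \<delta>_def r_def by simp
  have Pk0: "P k0"
  proof -
    have "infsum r {k0+1..} \<le> mm / (4 * real n)"
    proof (rule infsum_le_bound_nn)
      fix F assume F: "finite F" "F \<subseteq> {k0+1..}"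
      have "sum r F \<le> (\<Sum>j\<in>F. 2 * ((d j)\<^sup>2 * (y_hat \<bullet> u j)\<^sup>2) + 2 * ((d j)\<^sup>2 * (Nn n j \<omega>)\<^sup>2))"
        by (intro sum_mono r_le)
      also have "\<dots> = 2 * (\<Sum>j\<in>F. (d j)\<^sup>2 * (y_hat \<bullet> u j)\<^sup>2) + 2 * (\<Sum>j\<in>F. (d j)\<^sup>2 * (Nn n j \<omega>)\<^sup>2)"
        by (simp add: sum.distrib sum_distrib_left)
      also have "(\<Sum>j\<in>F. (d j)\<^sup>2 * (Nn n j \<omega>)\<^sup>2) = (\<Sum>j\<in>F. if k0 < j then (d j)\<^sup>2 * (Nn n j \<omega>)\<^sup>2 else 0)"
        using F by (intro sum.cong) auto
      also have "\<dots> \<le> enn2real (At n k0 \<omega>)"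
        unfolding At_def by (rule sum_le_enn2real) (use Atfin F in \<open>auto simp: At_def\<close>)
      also have "enn2real (At n k0 \<omega>) \<le> mm / (16 * real n)"
        using H3 mm rn by (intro enn2real_leI) auto
      finally show "sum r F \<le> mm / (4 * real n)" using H6[OF F] by simp
    qed (use mm rn in auto)
    then have "sqrt (infsum r {k0+1..}) \<le> sqrt (\<delta>\<^sup>2)" using \<delta>low by (intro real_sqrt_le_mono) linarith
    then show ?thesis using \<delta>0 by (simp add: P_def)
  qed
  show "kstop d u Y n \<omega> \<le> k0" unfolding kst by (rule Least_le[where P=P, OF Pk0])
  have Pks: "P (kstop d u Y n \<omega>)" unfolding kst by (rule LeastI[where P=P, OF Pk0])
  define ks where "ks = kstop d u Y n \<omega>"
  have tail: "infsum r {ks+1..} \<le> 6 * T / real n"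
  proof -
    have t0: "0 \<le> infsum r {ks+1..}" by (intro infsum_nonneg r0)
    have "sqrt (infsum r {ks+1..}) \<le> \<delta>" using Pks by (simp add: P_def ks_def)
    then have "infsum r {ks+1..} \<le> \<delta>\<^sup>2" using t0 \<delta>0 by (metis real_le_rsqrt real_sqrt_le_iff sqrt_le_D)
    then show ?thesis using \<delta>up by simp
  qed
  fix F assume F: "finite F" "F \<subseteq> {kstop d u Y n \<omega> + 1..}"
  then have F': "F \<subseteq> {ks+1..}" by (simp add: ks_def)
  have "(\<Sum>j\<in>F. (d j)\<^sup>2 * (y_hat \<bullet> u j)\<^sup>2) \<le> (\<Sum>j\<in>F. 2 * r j + 2 * ((d j)\<^sup>2 * (Nn n j \<omega>)\<^sup>2))"
    by (intro sum_mono yh_le)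
  also have "\<dots> = 2 * sum r F + 2 * (\<Sum>j\<in>F. (d j)\<^sup>2 * (Nn n j \<omega>)\<^sup>2)"
    by (simp add: sum.distrib sum_distrib_left)
  also have "sum r F \<le> infsum r {ks+1..}"
    by (rule finite_sum_le_infsum[OF rsum F(1) F']) (auto simp: r0)
  finally have "(\<Sum>j\<in>F. (d j)\<^sup>2 * (y_hat \<bullet> u j)\<^sup>2) \<le> 2 * infsum r {ks+1..} + 2 * ar"
    using NF[OF F(1)] by linarith
  also have "\<dots> \<le> 2 * (6 * T / real n) + 2 * (T / real n)" using tail arT by linarith
  finally show "(\<Sum>j\<in>F. (d j)\<^sup>2 * (y_hat \<bullet> u j)\<^sup>2) \<le> 14 * T / real n" by simp
qed

end

context thm2_setup
begin

lemma nn_suminf_exp: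
  fixes f :: "nat \<Rightarrow> 'a \<Rightarrow> real"
  assumes meas: "\<And>j. (\<lambda>\<omega>. f j \<omega>) \<in> borel_measurable M" and nn: "\<And>j \<omega>. 0 \<le> f j \<omega>"
    and int: "\<And>j. integrable M (f j)" and sm: "summable (\<lambda>j. expectation (f j))"
  shows "(\<integral>\<^sup>+\<omega>. (\<Sum>j. ennreal (f j \<omega>)) \<partial>M) = ennreal (\<Sum>j. expectation (f j))"
proof -
  have "(\<integral>\<^sup>+\<omega>. (\<Sum>j. ennreal (f j \<omega>)) \<partial>M) = (\<Sum>j. (\<integral>\<^sup>+\<omega>. ennreal (f j \<omega>) \<partial>M))"
    by (rule nn_integral_suminf) (use meas in measurable)
  also have "\<dots> = (\<Sum>j. ennreal (expectation (f j)))"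
    by (intro arg_cong[where f=suminf] ext nn_integral_eq_integral int) (auto simp: nn)
  also have "\<dots> = ennreal (\<Sum>j. expectation (f j))"
    by (rule suminf_ennreal2[OF _ sm]) (auto intro: integral_nonneg_AE simp: nn)
  finally show ?thesis .
qed

lemma d0: "d 0 = 0" by (simp add: d_def)

lemma Bs_meas: "i \<ge> 1 \<Longrightarrow> Bs i \<in> borel_measurable M"
  unfolding Bs_def[abs_def] using Z_meas by measurable

lemma Ae_meas: "Ae n \<in> borel_measurable M"
  unfolding Ae_def[abs_def] using Nn_meas by measurable

lemma At_meas: "At n k \<in> borel_measurable M"
  unfolding At_def[abs_def] using Nn_meas by measurable

definition Dc :: real where "Dc = (\<Sum>j. (d j)\<^sup>2 * s2 j)"
definition tD :: "nat \<Rightarrow> real" where "tD k = (\<Sum>j. if k < j then (d j)\<^sup>2 * s2 j else 0)"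

lemma C2_pos: "C2 > 0"
proof -
  have "0 < c2 * real 1 powr (- p)" using sc(1) by simp
  also have "\<dots> \<le> C2 * real 1 powr (- p)" using sc(2)[of 1] by simp
  finally show ?thesis by simp
qed

lemma ds2_le: "(d j)\<^sup>2 * s2 j \<le> C2 * real j powr (- 1 - \<epsilon>)"
proof (cases "j = 0")
  case True then show ?thesis by (simp add: d0)
next
  case False
  then have j: "j \<ge> 1" by simp
  have "(d j)\<^sup>2 * s2 j \<le> real j powr (p - 1 - \<epsilon>) * (C2 * real j powr (- p))"
    using sc(2)[OF j] by (simp add: d2 s2_def' mult_left_mono)
  also have "\<dots> = C2 * real j powr (- 1 - \<epsilon>)" using j by (simp add: powr_add[symmetric])
  finally show ?thesis .
qed

lemma ds2_summable: "summable (\<lambda>j. (d j)\<^sup>2 * s2 j)"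
proof (rule summable_comparison_test'[where g="\<lambda>j. C2 * real j powr (- 1 - \<epsilon>)"])
  show "summable (\<lambda>j. C2 * real j powr (- 1 - \<epsilon>))"
    using \<epsilon> by (intro summable_mult) (simp add: summable_real_powr_iff)
  show "norm ((d j)\<^sup>2 * s2 j) \<le> C2 * real j powr (- 1 - \<epsilon>)" for j
    using ds2_le[of j] s2_nonneg[of j] by simp
qed

lemma tD_lim: "tD \<longlonglongrightarrow> 0"
  unfolding tD_def[abs_def] by (rule tail_tendsto0[OF _ ds2_summable]) (simp add: s2_nonneg)

lemma Dc_nonneg: "0 \<le> Dc" unfolding Dc_def by (intro suminf_nonneg ds2_summable) (simp add: s2_nonneg)

lemma exp_Bs: assumes i: "i \<ge> 1" shows "(\<integral>\<^sup>+\<omega>. Bs i \<omega> \<partial>M) = ennreal Dc"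
proof -
  have int: "integrable M (\<lambda>\<omega>. (d j)\<^sup>2 * (Z i j \<omega>)\<^sup>2)" for j
    by (cases "j = 0") (auto simp: d0 Zsq_int(1)[OF i])
  have ex: "expectation (\<lambda>\<omega>. (d j)\<^sup>2 * (Z i j \<omega>)\<^sup>2) = (d j)\<^sup>2 * s2 j" for j
    by (cases "j = 0") (auto simp: d0 Zsq_int(2)[OF i])
  have sm: "summable (\<lambda>j. expectation (\<lambda>\<omega>. (d j)\<^sup>2 * (Z i j \<omega>)\<^sup>2))"
    unfolding ex by (rule ds2_summable)
  have "(\<integral>\<^sup>+\<omega>. Bs i \<omega> \<partial>M) = ennreal (\<Sum>j. expectation (\<lambda>\<omega>. (d j)\<^sup>2 * (Z i j \<omega>)\<^sup>2))"
    unfolding Bs_def by (rule nn_suminf_exp[OF _ _ int sm]) (use Z_meas[OF i] in auto)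
  then show ?thesis unfolding ex Dc_def .
qed

lemma exp_Ae: assumes n: "n \<ge> 1" shows "(\<integral>\<^sup>+\<omega>. Ae n \<omega> \<partial>M) = ennreal (Dc / real n)"
proof -
  have int: "integrable M (\<lambda>\<omega>. (d j)\<^sup>2 * (Nn n j \<omega>)\<^sup>2)" for j
    by (cases "j = 0") (auto simp: d0 Nn_sq(1)[OF n])
  have ex: "expectation (\<lambda>\<omega>. (d j)\<^sup>2 * (Nn n j \<omega>)\<^sup>2) = (d j)\<^sup>2 * s2 j / real n" for j
    by (cases "j = 0") (auto simp: d0 Nn_sq(2)[OF n])
  have sm: "summable (\<lambda>j. (d j)\<^sup>2 * s2 j / real n)" by (intro summable_divide ds2_summable)
  have sm': "summable (\<lambda>j. expectation (\<lambda>\<omega>. (d j)\<^sup>2 * (Nn n j \<omega>)\<^sup>2))"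
    unfolding ex by (rule sm)
  have "(\<integral>\<^sup>+\<omega>. Ae n \<omega> \<partial>M) = ennreal (\<Sum>j. expectation (\<lambda>\<omega>. (d j)\<^sup>2 * (Nn n j \<omega>)\<^sup>2))"
    unfolding Ae_def by (rule nn_suminf_exp[OF _ _ int sm']) (use Nn_meas in auto)
  also have "\<dots> = ennreal (\<Sum>j. (d j)\<^sup>2 * s2 j / real n)" unfolding ex ..
  also have "(\<Sum>j. (d j)\<^sup>2 * s2 j / real n) = Dc / real n"
    unfolding Dc_def by (rule suminf_divide[OF ds2_summable])
  finally show ?thesis .
qed

lemma exp_At: assumes n: "n \<ge> 1" shows "(\<integral>\<^sup>+\<omega>. At n k \<omega> \<partial>M) = ennreal (tD k / real n)"
proof -
  define f where "f j \<omega> = (if k < j then (d j)\<^sup>2 * (Nn n j \<omega>)\<^sup>2 else 0)" for j \<omega>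
  have int: "integrable M (\<lambda>\<omega>. f j \<omega>)" for j
    by (cases "j = 0"; cases "k < j") (auto simp: f_def d0 Nn_sq(1)[OF n])
  have ex: "expectation (\<lambda>\<omega>. f j \<omega>) = (if k < j then (d j)\<^sup>2 * s2 j else 0) / real n" for j
    by (cases "j = 0"; cases "k < j") (auto simp: f_def d0 Nn_sq(2)[OF n])
  have s0: "summable (\<lambda>j. if k < j then (d j)\<^sup>2 * s2 j else 0)"
    by (rule summable_comparison_test'[OF ds2_summable]) (auto simp: s2_nonneg)
  have sm: "summable (\<lambda>j. (if k < j then (d j)\<^sup>2 * s2 j else 0) / real n)" by (intro summable_divide s0)
  have sm': "summable (\<lambda>j. expectation (\<lambda>\<omega>. f j \<omega>))" unfolding ex by (rule sm)
  have mf: "(\<lambda>\<omega>. f j \<omega>) \<in> borel_measurable M" for j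
    unfolding f_def using Nn_meas by measurable
  have "(\<integral>\<^sup>+\<omega>. At n k \<omega> \<partial>M) = ennreal (\<Sum>j. expectation (\<lambda>\<omega>. f j \<omega>))"
    unfolding At_def f_def[symmetric] by (rule nn_suminf_exp[OF mf _ int sm']) (auto simp: f_def)
  also have "\<dots> = ennreal (\<Sum>j. (if k < j then (d j)\<^sup>2 * s2 j else 0) / real n)" unfolding ex ..
  also have "(\<Sum>j. (if k < j then (d j)\<^sup>2 * s2 j else 0) / real n) = tD k / real n"
    unfolding tD_def by (rule suminf_divide[OF s0])
  finally show ?thesis .
qed

lemma markov_real:
  assumes U: "integrable M U" and nn: "\<And>\<omega>. \<omega> \<in> space M \<Longrightarrow> 0 \<le> U \<omega>" and c: "0 < c"
  shows "prob {\<omega>\<in>space M. c \<le> U \<omega>} \<le> expectation U / c"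
  using integral_Markov_inequality_measure[OF U sets.top _ c] nn by auto

definition mm :: real where "mm = expectation (\<lambda>\<omega>. min ((Z 1 1 \<omega>)\<^sup>2) 1)"
definition Vn :: "nat \<Rightarrow> nat \<Rightarrow> 'a \<Rightarrow> real" where "Vn n k \<omega> = (\<Sum>j=1..k. (Nn n j \<omega> / \<sigma> j)\<^sup>2)"

lemma min_int: "integrable M (\<lambda>\<omega>. min ((Z 1 1 \<omega>)\<^sup>2) 1)"
proof (rule integrable_const_bound[where B=1])
  show "(\<lambda>\<omega>. min ((Z 1 1 \<omega>)\<^sup>2) 1) \<in> borel_measurable M" using Z_meas[of 1 1] by measurable
qed auto

lemma mm_pos: "mm > 0"
proof (rule ccontr)
  assume "\<not> mm > 0"
  moreover have "mm \<ge> 0" unfolding mm_def by (intro integral_nonneg_AE) auto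
  ultimately have "mm = 0" by simp
  then have "AE \<omega> in M. min ((Z 1 1 \<omega>)\<^sup>2) 1 = 0"
    using integral_nonneg_eq_0_iff_AE[OF min_int] unfolding mm_def by auto
  then have ae: "AE \<omega> in M. (Z 1 1 \<omega>)\<^sup>2 = 0"
    by eventually_elim (auto simp: min_def split: if_splits)
  have "s2 1 = expectation (\<lambda>\<omega>. 0::real)"
    unfolding s2_def by (rule integral_cong_AE) (use Z_meas[of 1 1] ae in auto)
  then have "s2 1 = 0" by simp
  moreover have "c2 * real 1 powr (- p) \<le> s2 1" using sc(2)[of 1] by (simp add: s2_def')
  ultimately show False using sc(1) by simp
qed

lemma mm_le1: "mm \<le> 1"
proof -
  have "mm \<le> expectation (\<lambda>\<omega>. 1::real)" unfolding mm_def
    by (intro integral_mono min_int) auto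
  then show ?thesis by (simp add: prob_space)
qed

lemma P_U: assumes n: "n \<ge> 1" and T: "T > 0"
  shows "prob {\<omega>\<in>space M. ennreal (real n * T) \<le> (\<Sum>i=1..n. Bs i \<omega>)} \<le> Dc / T"
proof -
  have m: "(\<lambda>\<omega>. \<Sum>i=1..n. Bs i \<omega>) \<in> borel_measurable M"
    by (intro borel_measurable_sum Bs_meas) auto
  have "(\<integral>\<^sup>+\<omega>. (\<Sum>i=1..n. Bs i \<omega>) \<partial>M) = (\<Sum>i=1..n. (\<integral>\<^sup>+\<omega>. Bs i \<omega> \<partial>M))"
    by (rule nn_integral_sum) (auto intro: Bs_meas)
  also have "\<dots> = (\<Sum>i=1..n. ennreal Dc)" by (intro sum.cong refl exp_Bs) auto
  also have "\<dots> = ennreal (real n * Dc)" using Dc_nonneg by (simp add: ennreal_mult' ennreal_of_nat_eq_real_of_nat)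
  finally have I: "(\<integral>\<^sup>+\<omega>. (\<Sum>i=1..n. Bs i \<omega>) \<partial>M) \<le> ennreal (real n * Dc)" by simp
  have "prob {\<omega>\<in>space M. ennreal (real n * T) \<le> (\<Sum>i=1..n. Bs i \<omega>)} \<le> (real n * Dc) / (real n * T)"
    by (rule markov_measure[OF M m _ I]) (use n T Dc_nonneg in auto)
  also have "\<dots> = Dc / T" using n by simp
  finally show ?thesis .
qed

lemma P_A: assumes n: "n \<ge> 1" and T: "T > 0"
  shows "prob {\<omega>\<in>space M. ennreal (T / real n) \<le> Ae n \<omega>} \<le> Dc / T"
proof -
  have "prob {\<omega>\<in>space M. ennreal (T / real n) \<le> Ae n \<omega>} \<le> (Dc / real n) / (T / real n)"
    by (rule markov_measure[OF M Ae_meas]) (use n T Dc_nonneg exp_Ae[OF n] in auto)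
  also have "\<dots> = Dc / T" using n by simp
  finally show ?thesis .
qed

lemma tD_nonneg: "0 \<le> tD k"
  unfolding tD_def by (intro suminf_nonneg summable_comparison_test'[OF ds2_summable]) (auto simp: s2_nonneg)

lemma P_At: assumes n: "n \<ge> 1" and c: "c > 0"
  shows "prob {\<omega>\<in>space M. ennreal c \<le> At n k \<omega>} \<le> tD k / (real n * c)"
proof -
  have "prob {\<omega>\<in>space M. ennreal c \<le> At n k \<omega>} \<le> (tD k / real n) / c"
    by (rule markov_measure[OF M At_meas]) (use n c tD_nonneg exp_At[OF n] in auto)
  then show ?thesis by simp
qed

lemma Vn_int: assumes n: "n \<ge> 1"
  shows "integrable M (Vn n k)" and "expectation (Vn n k) = (\<Sum>j=1..k. s2 j / (\<sigma> j)\<^sup>2) / real n"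
proof -
  have i: "integrable M (\<lambda>\<omega>. (Nn n j \<omega> / \<sigma> j)\<^sup>2)" if "j \<in> {1..k}" for j
    using Nn_sq(1)[OF n, of j] that by (simp add: power_divide)
  show "integrable M (Vn n k)" unfolding Vn_def[abs_def] using i by (intro Bochner_Integration.integrable_sum) auto
  have "expectation (Vn n k) = (\<Sum>j=1..k. expectation (\<lambda>\<omega>. (Nn n j \<omega> / \<sigma> j)\<^sup>2))"
    unfolding Vn_def[abs_def] using i by (intro Bochner_Integration.integral_sum) auto
  also have "\<dots> = (\<Sum>j=1..k. s2 j / (\<sigma> j)\<^sup>2 / real n)"
    using Nn_sq(2)[OF n] by (intro sum.cong refl) (simp add: power_divide)
  also have "\<dots> = (\<Sum>j=1..k. s2 j / (\<sigma> j)\<^sup>2) / real n" by (simp add: sum_divide_distrib)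
  finally show "expectation (Vn n k) = (\<Sum>j=1..k. s2 j / (\<sigma> j)\<^sup>2) / real n" .
qed

lemma P_V: assumes n: "n \<ge> 1" and c: "c > 0"
  shows "prob {\<omega>\<in>space M. c \<le> Vn n k \<omega>} \<le> (\<Sum>j=1..k. s2 j / (\<sigma> j)\<^sup>2) / (real n * c)"
proof -
  have "prob {\<omega>\<in>space M. c \<le> Vn n k \<omega>} \<le> expectation (Vn n k) / c"
    by (rule markov_real[OF Vn_int(1)[OF n] _ c]) (simp add: Vn_def sum_nonneg)
  then show ?thesis using Vn_int(2)[OF n] by simp
qed

lemma P_S2: assumes n: "n \<ge> 1"
  shows "prob {\<omega>\<in>space M. mm / 4 \<le> (Nn n 1 \<omega>)\<^sup>2} \<le> 4 * s2 1 / (real n * mm)"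
proof -
  have "prob {\<omega>\<in>space M. mm / 4 \<le> (Nn n 1 \<omega>)\<^sup>2} \<le> expectation (\<lambda>\<omega>. (Nn n 1 \<omega>)\<^sup>2) / (mm / 4)"
    by (rule markov_real[OF Nn_sq(1)[OF n]]) (use mm_pos in auto)
  then show ?thesis using Nn_sq(2)[OF n, of 1] by (simp add: mult.commute)
qed

lemma P_S1: assumes n: "n \<ge> 1"
  shows "prob {\<omega>\<in>space M. (\<Sum>i=1..n. min ((Z i 1 \<omega>)\<^sup>2) 1) \<le> real n * mm / 2} \<le> 4 / (real n * mm\<^sup>2)"
proof -
  define g where "g y = min (((y - y_hat) \<bullet> u 1)\<^sup>2) 1 - mm" for y
  have gm[measurable]: "g \<in> borel_measurable borel" unfolding g_def[abs_def] by measurable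
  have Y1[measurable]: "Y 1 \<in> borel_measurable M" using Y_rv by auto
  have gb: "\<bar>g y\<bar> \<le> 1" for y
  proof -
    have h: "0 \<le> ((y - y_hat) \<bullet> u 1)\<^sup>2" by simp
    show ?thesis using mm_pos mm_le1 unfolding g_def by (auto simp: min_def abs_le_iff) (use zero_le_power2[of "(y - y_hat) \<bullet> u (Suc 0)"] in linarith)
  qed
  have mg1: "(\<lambda>\<omega>. g (Y 1 \<omega>)) \<in> borel_measurable M" by measurable
  have mg2: "(\<lambda>\<omega>. (g (Y 1 \<omega>))\<^sup>2) \<in> borel_measurable M" by measurable
  have ig: "integrable M (\<lambda>\<omega>. g (Y 1 \<omega>))"
    by (rule integrable_const_bound[where B=1, OF _ mg1]) (use gb in auto)
  have ig2: "integrable M (\<lambda>\<omega>. (g (Y 1 \<omega>))\<^sup>2)"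
    by (rule integrable_const_bound[where B=1, OF _ mg2]) (use gb in \<open>auto simp: abs_square_le_1\<close>)
  have m0: "expectation (\<lambda>\<omega>. g (Y 1 \<omega>)) = 0"
  proof -
    have "expectation (\<lambda>\<omega>. g (Y 1 \<omega>)) = expectation (\<lambda>\<omega>. min ((Z 1 1 \<omega>)\<^sup>2) 1) - expectation (\<lambda>\<omega>. mm)"
      unfolding g_def Z_def using min_int by (intro Bochner_Integration.integral_diff) (auto simp: Z_def)
    then show ?thesis by (simp add: mm_def prob_space)
  qed
  note S = sumsq[OF gm ig ig2 m0, of n]
  have e2: "expectation (\<lambda>\<omega>. (g (Y 1 \<omega>))\<^sup>2) \<le> 1"
  proof -
    have "expectation (\<lambda>\<omega>. (g (Y 1 \<omega>))\<^sup>2) \<le> expectation (\<lambda>\<omega>. 1::real)"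
      using gb by (intro integral_mono ig2) (auto simp: abs_square_le_1)
    then show ?thesis by (simp add: prob_space)
  qed
  define c where "c = (real n * mm / 2)\<^sup>2"
  have c0: "c > 0" using n mm_pos by (simp add: c_def)
  have sub: "{\<omega>\<in>space M. (\<Sum>i=1..n. min ((Z i 1 \<omega>)\<^sup>2) 1) \<le> real n * mm / 2}
     \<subseteq> {\<omega>\<in>space M. c \<le> (\<Sum>i=1..n. g (Y i \<omega>))\<^sup>2}"
  proof safe
    fix \<omega> assume \<omega>: "\<omega> \<in> space M" and le: "(\<Sum>i=1..n. min ((Z i 1 \<omega>)\<^sup>2) 1) \<le> real n * mm / 2"
    have "(\<Sum>i=1..n. g (Y i \<omega>)) = (\<Sum>i=1..n. min ((Z i 1 \<omega>)\<^sup>2) 1) - real n * mm"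
      by (simp add: g_def Z_def sum_subtractf)
    then have "(\<Sum>i=1..n. g (Y i \<omega>)) \<le> - (real n * mm / 2)" using le by simp
    moreover have "0 \<le> real n * mm / 2" using mm_pos by simp
    ultimately have "\<bar>real n * mm / 2\<bar> \<le> \<bar>\<Sum>i=1..n. g (Y i \<omega>)\<bar>"
      by (auto simp: abs_if)
    then have "(real n * mm / 2)\<^sup>2 \<le> (\<Sum>i=1..n. g (Y i \<omega>))\<^sup>2"
      by (simp only: abs_le_square_iff)
    then show "c \<le> (\<Sum>i=1..n. g (Y i \<omega>))\<^sup>2" by (simp add: c_def)
  qed
  have mS: "{\<omega>\<in>space M. c \<le> (\<Sum>i=1..n. g (Y i \<omega>))\<^sup>2} \<in> sets M"
  proof -
    have "(\<lambda>\<omega>. (\<Sum>i=1..n. g (Y i \<omega>))\<^sup>2) \<in> borel_measurable M"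
      by (intro borel_measurable_power borel_measurable_sum measurable_compose[OF _ gm]) (use Y_rv in auto)
    then show ?thesis by measurable
  qed
  have "prob {\<omega>\<in>space M. (\<Sum>i=1..n. min ((Z i 1 \<omega>)\<^sup>2) 1) \<le> real n * mm / 2}
        \<le> prob {\<omega>\<in>space M. c \<le> (\<Sum>i=1..n. g (Y i \<omega>))\<^sup>2}"
    by (rule finite_measure_mono[OF sub mS])
  also have "\<dots> \<le> expectation (\<lambda>\<omega>. (\<Sum>i=1..n. g (Y i \<omega>))\<^sup>2) / c"
    by (rule markov_real[OF S(1) _ c0]) auto
  also have "\<dots> \<le> real n / c" using S(2) e2 c0 n
    by (simp add: divide_right_mono mult_left_le)
  also have "\<dots> = 4 / (real n * mm\<^sup>2)" using n mm_pos by (simp add: c_def power2_eq_square field_simps)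
  finally show ?thesis .
qed

definition gxi :: "nat \<Rightarrow> real" where "gxi j = (if j \<ge> 1 then (\<xi> \<bullet> v j)\<^sup>2 else 0)"
definition txi :: "nat \<Rightarrow> real" where "txi N = (\<Sum>j. if N < j then gxi j else 0)"

lemma gxi_nonneg: "0 \<le> gxi j" by (simp add: gxi_def)

lemma gxi_summable: "summable gxi"
proof (rule summableI_nonneg_bounded[where x="(norm \<xi>)\<^sup>2"])
  show "0 \<le> gxi n" for n by (rule gxi_nonneg)
  fix n
  have "(\<Sum>i<n. gxi i) = (\<Sum>i\<in>{..<n} \<inter> {1..}. (\<xi> \<bullet> v i)\<^sup>2)"
    by (subst sum.inter_restrict) (auto simp: gxi_def)
  also have "\<dots> \<le> (norm \<xi>)\<^sup>2" by (rule bessel[OF v_on]) auto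
  finally show "(\<Sum>i<n. gxi i) \<le> (norm \<xi>)\<^sup>2" .
qed

lemma txi_lim: "txi \<longlonglongrightarrow> 0"
  unfolding txi_def[abs_def] by (rule tail_tendsto0[OF gxi_nonneg gxi_summable])

lemma bias_bound:
  assumes m: "m > 0" and F: "finite F" "F \<subseteq> {1..}"
    and Bd: "(\<Sum>j\<in>F. (d j)\<^sup>2 * (y_hat \<bullet> u j)\<^sup>2) \<le> Bd"
  shows "(\<Sum>j\<in>F. (ac j)\<^sup>2) \<le> m powr bb / c1 * Bd + C1 powr \<nu> * m powr (- q * \<nu>) * txi (nat \<lfloor>m\<rfloor>)"
proof -
  define F1 where "F1 = {j\<in>F. real j \<le> m}"
  define F2 where "F2 = {j\<in>F. \<not> real j \<le> m}"
  have FU: "F = F1 \<union> F2" and FD: "F1 \<inter> F2 = {}" and fin: "finite F1" "finite F2"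
    using F by (auto simp: F1_def F2_def)
  have s1: "(\<Sum>j\<in>F1. (ac j)\<^sup>2) \<le> m powr bb / c1 * Bd"
  proof -
    have "(\<Sum>j\<in>F1. (ac j)\<^sup>2) \<le> (\<Sum>j\<in>F1. m powr bb / c1 * ((d j)\<^sup>2 * (y_hat \<bullet> u j)\<^sup>2))"
    proof (intro sum_mono)
      fix j assume jF: "j \<in> F1"
      then have j: "j \<ge> 1" and jm: "real j \<le> m" using F by (auto simp: F1_def)
      have jp: "real j > 0" using j by simp
      have low: "c1 * real j powr (- bb) * (ac j)\<^sup>2 \<le> (d j)\<^sup>2 * (y_hat \<bullet> u j)\<^sup>2" by (rule yh_low[OF j])
      have "(ac j)\<^sup>2 = real j powr bb * (real j powr (- bb) * (ac j)\<^sup>2)"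
        using jp by (simp add: powr_minus field_simps)
      also have "\<dots> \<le> m powr bb * (real j powr (- bb) * (ac j)\<^sup>2)"
        using jm jp bb_pos by (intro mult_right_mono powr_mono2) auto
      also have "\<dots> \<le> m powr bb * (((d j)\<^sup>2 * (y_hat \<bullet> u j)\<^sup>2) / c1)"
        using low \<sigma>c(1) by (intro mult_left_mono) (auto simp: field_simps)
      finally show "(ac j)\<^sup>2 \<le> m powr bb / c1 * ((d j)\<^sup>2 * (y_hat \<bullet> u j)\<^sup>2)" by simp
    qed
    also have "\<dots> = m powr bb / c1 * (\<Sum>j\<in>F1. (d j)\<^sup>2 * (y_hat \<bullet> u j)\<^sup>2)" by (simp add: sum_distrib_left)
    also have "\<dots> \<le> m powr bb / c1 * Bd"
    proof -
      have "(\<Sum>j\<in>F1. (d j)\<^sup>2 * (y_hat \<bullet> u j)\<^sup>2) \<le> (\<Sum>j\<in>F. (d j)\<^sup>2 * (y_hat \<bullet> u j)\<^sup>2)"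
        using F by (intro sum_mono2) (auto simp: F1_def)
      then have "(\<Sum>j\<in>F1. (d j)\<^sup>2 * (y_hat \<bullet> u j)\<^sup>2) \<le> Bd" using Bd by linarith
      moreover have "0 \<le> m powr bb / c1" using \<sigma>c(1) by simp
      ultimately show ?thesis by (rule mult_left_mono)
    qed
    finally show ?thesis .
  qed
  have s2': "(\<Sum>j\<in>F2. (ac j)\<^sup>2) \<le> C1 powr \<nu> * m powr (- q * \<nu>) * txi (nat \<lfloor>m\<rfloor>)"
  proof -
    have "(\<Sum>j\<in>F2. (ac j)\<^sup>2) \<le> (\<Sum>j\<in>F2. C1 powr \<nu> * m powr (- q * \<nu>) * gxi j)"
    proof (intro sum_mono)
      fix j assume jF: "j \<in> F2"
      then have j: "j \<ge> 1" and jm: "m < real j" using F by (auto simp: F2_def)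
      have "(ac j)\<^sup>2 \<le> C1 powr \<nu> * real j powr (- q * \<nu>) * (\<xi> \<bullet> v j)\<^sup>2" by (rule ac_up[OF j])
      also have "real j powr (- q * \<nu>) \<le> m powr (- q * \<nu>)"
        using jm m qp \<nu>\<rho> by (intro powr_mono2') (auto simp: mult_pos_pos)
      then have "C1 powr \<nu> * real j powr (- q * \<nu>) * (\<xi> \<bullet> v j)\<^sup>2 \<le> C1 powr \<nu> * m powr (- q * \<nu>) * (\<xi> \<bullet> v j)\<^sup>2"
        by (intro mult_right_mono mult_left_mono) auto
      finally show "(ac j)\<^sup>2 \<le> C1 powr \<nu> * m powr (- q * \<nu>) * gxi j" using j by (simp add: gxi_def)
    qed
    also have "\<dots> = C1 powr \<nu> * m powr (- q * \<nu>) * sum gxi F2" by (simp add: sum_distrib_left)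
    also have "sum gxi F2 \<le> txi (nat \<lfloor>m\<rfloor>)"
      unfolding txi_def
    proof (rule sum_le_tail[OF gxi_nonneg gxi_summable fin(2)])
      fix j assume "j \<in> F2" then have "m < real j" by (auto simp: F2_def)
      then show "nat \<lfloor>m\<rfloor> < j" using m by linarith
    qed
    finally show ?thesis by (simp add: mult_left_mono)
  qed
  have "(\<Sum>j\<in>F. (ac j)\<^sup>2) = (\<Sum>j\<in>F1. (ac j)\<^sup>2) + (\<Sum>j\<in>F2. (ac j)\<^sup>2)"
    unfolding FU by (rule sum.union_disjoint[OF fin FD])
  then show ?thesis using s1 s2' by linarith
qed

lemma H6_bound:
  assumes n: "n \<ge> 1" and k0: "k0 \<ge> 1"
    and K: "16 * real n * C1 powr (1 + \<nu>) * ((norm \<xi>)\<^sup>2 + 1) / mm \<le> real k0 powr aa"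
    and F: "finite F" "F \<subseteq> {k0+1..}"
  shows "(\<Sum>j\<in>F. (d j)\<^sup>2 * (y_hat \<bullet> u j)\<^sup>2) \<le> mm / (16 * real n)"
proof -
  have kp: "real k0 > 0" using k0 by simp
  have kpa: "real k0 powr aa > 0" using kp by simp
  have F1: "F \<subseteq> {1..}" using F by auto
  have "(\<Sum>j\<in>F. (d j)\<^sup>2 * (y_hat \<bullet> u j)\<^sup>2) \<le> (\<Sum>j\<in>F. C1 powr (1 + \<nu>) * real k0 powr (- aa) * (\<xi> \<bullet> v j)\<^sup>2)"
  proof (intro sum_mono)
    fix j assume jF: "j \<in> F"
    then have j: "j \<ge> 1" and jk: "k0 < j" using F by auto
    have "real j powr (- aa) \<le> real k0 powr (- aa)"
      using jk kp aa_pos by (intro powr_mono2') auto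
    then have "C1 powr (1 + \<nu>) * real j powr (- aa) * (\<xi> \<bullet> v j)\<^sup>2 \<le> C1 powr (1 + \<nu>) * real k0 powr (- aa) * (\<xi> \<bullet> v j)\<^sup>2"
      by (intro mult_right_mono mult_left_mono) auto
    then show "(d j)\<^sup>2 * (y_hat \<bullet> u j)\<^sup>2 \<le> C1 powr (1 + \<nu>) * real k0 powr (- aa) * (\<xi> \<bullet> v j)\<^sup>2"
      using yh_up[OF j] by linarith
  qed
  also have "\<dots> = C1 powr (1 + \<nu>) * real k0 powr (- aa) * (\<Sum>j\<in>F. (\<xi> \<bullet> v j)\<^sup>2)" by (simp add: sum_distrib_left)
  also have "\<dots> \<le> C1 powr (1 + \<nu>) * real k0 powr (- aa) * ((norm \<xi>)\<^sup>2 + 1)"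
    using bessel[OF v_on F(1) F1, of \<xi>] by (intro mult_left_mono) auto
  also have "\<dots> = C1 powr (1 + \<nu>) * ((norm \<xi>)\<^sup>2 + 1) / real k0 powr aa"
    by (simp add: powr_minus field_simps)
  also have "\<dots> \<le> mm / (16 * real n)"
  proof -
    have A: "C1 powr (1 + \<nu>) * ((norm \<xi>)\<^sup>2 + 1) * (16 * real n) \<le> mm * real k0 powr aa"
      using K mm_pos by (simp add: field_simps)
    show ?thesis using A kpa n by (simp add: field_simps)
  qed
  finally show ?thesis .
qed

definition Zc :: real where "Zc = (\<Sum>j. real j powr (- 1 - \<epsilon> / 2))"

lemma var_sum_bound:
  assumes k: "k \<ge> 1"
  shows "(\<Sum>j=1..k. s2 j / (\<sigma> j)\<^sup>2) \<le> C2 / c1 * Zc * real k powr (1 + q - p + \<epsilon> / 2)"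
proof -
  define e where "e = 1 + q - p + \<epsilon> / 2"
  have e0: "e > 0" using qp \<epsilon> by (simp add: e_def)
  have sZ: "summable (\<lambda>j. real j powr (- 1 - \<epsilon> / 2))" using \<epsilon> by (simp add: summable_real_powr_iff)
  have "(\<Sum>j=1..k. s2 j / (\<sigma> j)\<^sup>2) \<le> (\<Sum>j=1..k. C2 / c1 * real k powr e * real j powr (- 1 - \<epsilon> / 2))"
  proof (intro sum_mono)
    fix j assume jk: "j \<in> {1..k}"
    then have j: "j \<ge> 1" and jle: "j \<le> k" by auto
    have jp: "real j > 0" using j by simp
    have sig: "c1 * real j powr (- q) \<le> (\<sigma> j)\<^sup>2" using \<sigma>c(2)[OF j] by simp
    have s2u: "s2 j \<le> C2 * real j powr (- p)" using sc(2)[OF j] by (simp add: s2_def')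
    have sp: "0 < c1 * real j powr (- q)" using \<sigma>c(1) jp by simp
    have "s2 j / (\<sigma> j)\<^sup>2 \<le> (C2 * real j powr (- p)) / (c1 * real j powr (- q))"
      using s2u sig sp s2_nonneg[of j] by (intro frac_le) auto
    also have "\<dots> = C2 / c1 * real j powr (q - p)"
      using jp \<sigma>c(1) by (simp add: powr_diff powr_minus field_simps)
    also have "real j powr (q - p) = real j powr e * real j powr (- 1 - \<epsilon> / 2)"
      by (simp add: powr_add[symmetric] e_def)
    also have "real j powr e \<le> real k powr e" using jle jp e0 by (intro powr_mono2) auto
    then have "C2 / c1 * (real j powr e * real j powr (- 1 - \<epsilon> / 2)) \<le> C2 / c1 * (real k powr e * real j powr (- 1 - \<epsilon> / 2))"
      using C2_pos \<sigma>c(1) by (intro mult_left_mono mult_right_mono) auto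
    finally show "s2 j / (\<sigma> j)\<^sup>2 \<le> C2 / c1 * real k powr e * real j powr (- 1 - \<epsilon> / 2)" by simp
  qed
  also have "\<dots> = C2 / c1 * real k powr e * (\<Sum>j=1..k. real j powr (- 1 - \<epsilon> / 2))" by (simp add: sum_distrib_left)
  also have "(\<Sum>j=1..k. real j powr (- 1 - \<epsilon> / 2)) \<le> Zc"
    unfolding Zc_def by (rule sum_le_suminf[OF sZ]) auto
  then have "C2 / c1 * real k powr e * (\<Sum>j=1..k. real j powr (- 1 - \<epsilon> / 2)) \<le> C2 / c1 * real k powr e * Zc"
    using C2_pos \<sigma>c(1) by (intro mult_left_mono) auto
  finally show ?thesis by (simp add: e_def mult_ac)
qed

end

lemma PA1:
  fixes lam a b t :: real
  assumes n: "n \<ge> 1" and lam: "lam > 0" and a: "a > 0" and t: "t = 1 - b / a"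
  shows "(lam * real n powr (1 / a)) powr b / real n = lam powr b * real n powr (- t)"
proof -
  have np: "real n > 0" using n by simp
  have "(lam * real n powr (1 / a)) powr b = lam powr b * real n powr (b / a)"
    using lam np by (simp add: powr_mult powr_powr)
  moreover have "real n powr (b / a) / real n = real n powr (- t)"
  proof -
    have "real n powr (- t) = real n powr (b / a) / real n powr 1"
      using np by (simp add: t powr_diff)
    then show ?thesis using np by simp
  qed
  ultimately show ?thesis by (metis times_divide_eq_right)
qed

lemma PA2:
  fixes lam a s :: real
  assumes n: "n \<ge> 1" and lam: "lam > 0"
  shows "(lam * real n powr (1 / a)) powr s = lam powr s * real n powr (s / a)"
  using n lam by (simp add: powr_mult powr_powr)

lemma PA5:
  fixes c0 t :: real
  assumes n: "n \<ge> 1" and c0: "c0 > 0"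
  shows "c0 * (1 / sqrt (real n)) powr t = 2 * sqrt (c0\<^sup>2 * real n powr (- t) / 4)"
proof -
  have np: "real n > 0" using n by simp
  have "(1 / sqrt (real n)) powr t = real n powr (- t / 2)"
    using np by (simp add: powr_half_sqrt[symmetric] powr_divide powr_powr powr_minus_divide)
  moreover have "sqrt (c0\<^sup>2 * real n powr (- t) / 4) = c0 / 2 * real n powr (- t / 2)"
  proof -
    have "c0\<^sup>2 * real n powr (- t) / 4 = (c0 / 2 * real n powr (- t / 2))\<^sup>2"
      using np by (simp add: power2_eq_square powr_add[symmetric] field_simps)
    then show ?thesis using c0 np by simp
  qed
  ultimately show ?thesis by simp
qed


lemma eventually_powr_ge:
  fixes c a :: real
  assumes c: "c > 0" and a: "a > 0"
  shows "eventually (\<lambda>n. Z \<le> c * real n powr a) sequentially"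
proof -
  define N where "N = nat \<lceil>(max Z 1 / c) powr (1 / a)\<rceil>"
  show ?thesis unfolding eventually_sequentially
  proof (intro exI allI impI)
    fix n assume n: "N \<le> n"
    have "(max Z 1 / c) powr (1 / a) \<le> real N" unfolding N_def by linarith
    also have "\<dots> \<le> real n" using n by simp
    finally have h: "(max Z 1 / c) powr (1 / a) \<le> real n" .
    have "max Z 1 / c = ((max Z 1 / c) powr (1 / a)) powr a"
      using c a by (simp add: powr_powr)
    also have "\<dots> \<le> real n powr a" using h a by (intro powr_mono2) auto
    finally have "max Z 1 \<le> c * real n powr a" using c by (simp add: field_simps)
    then show "Z \<le> c * real n powr a" by linarith
  qed
qed

lemma filterlim_powr_seq:
  fixes c a :: real
  assumes c: "c > 0" and a: "a > 0"
  shows "filterlim (\<lambda>n. c * real n powr a) at_top sequentially"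
  unfolding filterlim_at_top using eventually_powr_ge[OF c a] by blast

lemma filterlim_nat_ceiling_powr:
  fixes c a :: real
  assumes c: "c > 0" and a: "a > 0"
  shows "filterlim (\<lambda>n. nat \<lceil>c * real n powr a\<rceil>) at_top sequentially"
  unfolding filterlim_at_top
proof
  fix Z :: nat
  show "eventually (\<lambda>n. Z \<le> nat \<lceil>c * real n powr a\<rceil>) sequentially"
    using eventually_powr_ge[OF c a, of "real Z"]
    by eventually_elim linarith
qed

lemma tendsto_powr_neg_seq:
  fixes s :: real assumes "s < 0"
  shows "(\<lambda>n. real n powr s) \<longlonglongrightarrow> 0"
  by (rule tendsto_neg_powr[OF assms filterlim_real_sequentially])

context thm2_setup
begin

lemma ybar_meas: "(\<lambda>\<omega>. ybar Y n \<omega>) \<in> borel_measurable M"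
  unfolding ybar_def by (intro borel_measurable_scaleR borel_measurable_const borel_measurable_sum) (use Y_rv in auto)

lemma xbar_meas: "(\<lambda>\<omega>. xbar \<sigma> u v (ybar Y n \<omega>) k) \<in> borel_measurable M"
  unfolding xbar_def using ybar_meas by measurable

lemma Dl_meas: "(\<lambda>\<omega>. Dl n i \<omega>) \<in> borel_measurable M" if "i \<ge> 1"
proof -
  have [measurable]: "(\<lambda>\<omega>. ybar Y n \<omega>) \<in> borel_measurable M" "Y i \<in> borel_measurable M"
    using ybar_meas Y_rv that by auto
  show ?thesis unfolding Dl_def
  proof (rule borel_measurable_infsum_nn)
    fix j show "(\<lambda>\<omega>. (d j)\<^sup>2 * ((Y i \<omega> - ybar Y n \<omega>) \<bullet> u j)\<^sup>2) \<in> borel_measurable M" by measurable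
  qed simp
qed

lemma delta'_meas: "(\<lambda>\<omega>. delta' d u Y n \<omega>) \<in> borel_measurable M"
proof -
  have [measurable]: "(\<lambda>\<omega>. \<Sum>i=1..n. Dl n i \<omega>) \<in> borel_measurable M"
    by (intro borel_measurable_sum Dl_meas) auto
  show ?thesis unfolding delta'_eq by measurable
qed

lemma kstop_meas: "(\<lambda>\<omega>. kstop d u Y n \<omega>) \<in> measurable M (count_space UNIV)"
proof -
  have [measurable]: "(\<lambda>\<omega>. ybar Y n \<omega>) \<in> borel_measurable M" by (rule ybar_meas)
  have t[measurable]: "(\<lambda>\<omega>. infsum (\<lambda>j. (d j)\<^sup>2 * (ybar Y n \<omega> \<bullet> u j)\<^sup>2) {k+1..}) \<in> borel_measurable M" for k
  proof (rule borel_measurable_infsum_nn)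
    fix j show "(\<lambda>\<omega>. (d j)\<^sup>2 * (ybar Y n \<omega> \<bullet> u j)\<^sup>2) \<in> borel_measurable M" by measurable
  qed simp
  have [measurable]: "(\<lambda>\<omega>. delta' d u Y n \<omega>) \<in> borel_measurable M" by (rule delta'_meas)
  show ?thesis unfolding kstop_def by measurable
qed

lemma err_meas: "(\<lambda>\<omega>. norm (xbar \<sigma> u v (ybar Y n \<omega>) (kstop d u Y n \<omega>) - x_hat)) \<in> borel_measurable M"
proof -
  have "(\<lambda>\<omega>. (\<lambda>k \<omega>. norm (xbar \<sigma> u v (ybar Y n \<omega>) k - x_hat)) (kstop d u Y n \<omega>) \<omega>) \<in> borel_measurable M"
  proof (rule measurable_compose_countable[OF _ kstop_meas])
    fix k
    have [measurable]: "(\<lambda>\<omega>. xbar \<sigma> u v (ybar Y n \<omega>) k) \<in> borel_measurable M" by (rule xbar_meas)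
    show "(\<lambda>\<omega>. norm (xbar \<sigma> u v (ybar Y n \<omega>) k - x_hat)) \<in> borel_measurable M" by measurable
  qed
  then show ?thesis by simp
qed

end

context thm2_setup
begin

lemma theta_eq: "(q / (q + 1 + \<epsilon> - p) * \<nu>) / (q / (q + 1 + \<epsilon> - p) * \<nu> + 1) = q * \<nu> / aa"
proof -
  define B where "B = q + 1 + \<epsilon> - p"
  have b: "B > 0" using bb_pos by (simp add: bb_def B_def)
  have a: "q * \<nu> + B > 0" using aa_pos by (simp add: aa_def bb_def B_def)
  have e1: "q / B * \<nu> + 1 = (q * \<nu> + B) / B" using b by (simp add: field_simps)
  have "(q / B * \<nu>) / (q / B * \<nu> + 1) = (q / B * \<nu>) / ((q * \<nu> + B) / B)" by (simp only: e1)
  also have "\<dots> = q * \<nu> / (q * \<nu> + B)" using a b by (simp add: field_simps)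
  finally show ?thesis by (simp add: B_def aa_def bb_def)
qed

lemma Zc_nonneg: "0 \<le> Zc"
  unfolding Zc_def using \<epsilon> by (intro suminf_nonneg) (auto simp: summable_real_powr_iff)

lemma main_lim:
  "(\<lambda>n. prob {\<omega> \<in> space M. norm (xbar \<sigma> u v (ybar Y n \<omega>) (kstop d u Y n \<omega>) - x_hat)
      \<le> 1 * \<rho> powr (1 / (1 + q / (q + 1 + \<epsilon> - p) * \<nu>))
          * (1 / sqrt (real n)) powr ((q / (q + 1 + \<epsilon> - p) * \<nu>) / (q / (q + 1 + \<epsilon> - p) * \<nu> + 1))})
   \<longlonglongrightarrow> 1"
proof -
  define \<theta> where "\<theta> = q * \<nu> / aa"
  define c0 where "c0 = \<rho> powr (1 / (1 + q / (q + 1 + \<epsilon> - p) * \<nu>))"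
  define tgt where "tgt n = {\<omega> \<in> space M. norm (xbar \<sigma> u v (ybar Y n \<omega>) (kstop d u Y n \<omega>) - x_hat)
      \<le> 1 * \<rho> powr (1 / (1 + q / (q + 1 + \<epsilon> - p) * \<nu>))
          * (1 / sqrt (real n)) powr ((q / (q + 1 + \<epsilon> - p) * \<nu>) / (q / (q + 1 + \<epsilon> - p) * \<nu> + 1))}" for n
  have Req: "1 * \<rho> powr (1 / (1 + q / (q + 1 + \<epsilon> - p) * \<nu>))
          * (1 / sqrt (real n)) powr ((q / (q + 1 + \<epsilon> - p) * \<nu>) / (q / (q + 1 + \<epsilon> - p) * \<nu> + 1))
          = c0 * (1 / sqrt (real n)) powr \<theta>" for n
    by (subst theta_eq) (simp add: c0_def \<theta>_def)
  have c0p: "c0 > 0" using \<nu>\<rho> by (simp add: c0_def)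
  have qnu: "q * \<nu> > 0" using qp \<nu>\<rho> by simp
  have \<theta>p: "\<theta> > 0" using qnu aa_pos by (simp add: \<theta>_def)
  have \<theta>bb: "\<theta> = 1 - bb / aa" using aa_pos by (simp add: \<theta>_def aa_def field_simps)
  have tgt_meas: "tgt n \<in> sets M" for n
  proof -
    have [measurable]: "(\<lambda>\<omega>. norm (xbar \<sigma> u v (ybar Y n \<omega>) (kstop d u Y n \<omega>) - x_hat)) \<in> borel_measurable M"
      by (rule err_meas)
    show ?thesis unfolding tgt_def by measurable
  qed
  have key: "eventually (\<lambda>n. prob (space M - tgt n) < r) sequentially" if r: "r > 0" for r
  proof -
    define T where "T = 4 * Dc / r + 1"
    have "0 \<le> 4 * Dc / r" using Dc_nonneg r by simp
    then have Tp: "T > 0" by (simp add: T_def)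
    have DT: "Dc / T \<le> r / 4"
    proof -
      have "Dc \<le> r / 4 * T" using r by (simp add: T_def field_simps)
      then show ?thesis using Tp by (simp add: field_simps)
    qed
    define lam where "lam = (c0\<^sup>2 * c1 / (112 * T)) powr (1 / bb)"
    have lx: "c0\<^sup>2 * c1 / (112 * T) > 0" using c0p \<sigma>c(1) Tp by simp
    have lamp: "lam > 0" unfolding lam_def using c0p \<sigma>c(1) Tp by simp
    have lamb: "lam powr bb = c0\<^sup>2 * c1 / (112 * T)"
      using lx bb_pos c0p \<sigma>c(1) Tp by (simp add: lam_def powr_powr)
    define X where "X = 16 * C1 powr (1 + \<nu>) * ((norm \<xi>)\<^sup>2 + 1) / mm"
    have xn: "(norm \<xi>)\<^sup>2 + 1 > 0" by (smt (verit) zero_le_power2)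
    have Xp: "X > 0" unfolding X_def using C1_pos mm_pos xn by (intro divide_pos_pos mult_pos_pos) auto
    define Kc where "Kc = X powr (1 / aa)"
    have Kcp: "Kc > 0" using Xp by (simp add: Kc_def)
    have Kca: "Kc powr aa = X" using Xp aa_pos by (simp add: Kc_def powr_powr)
    define k0 where "k0 n = nat \<lceil>Kc * real n powr (1 / aa)\<rceil>" for n
    define mn where "mn n = lam * real n powr (1 / aa)" for n
    define e where "e = 1 + q - p + \<epsilon> / 2"
    have e0: "e > 0" using qp \<epsilon> by (simp add: e_def)
    define Gc where "Gc = 4 * (C2 / c1 * Zc * (2 * Kc) powr e) / c0\<^sup>2"
    define Perr where "Perr n = 16 * tD (k0 n) / mm + Gc * real n powr (- \<epsilon> / (2 * aa))
        + 4 / (real n * mm\<^sup>2) + 4 * s2 1 / (real n * mm)" for n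
    have aai: "1 / aa > 0" using aa_pos by simp
    have Perr_lim: "Perr \<longlonglongrightarrow> 0"
    proof -
      have t1: "(\<lambda>n. tD (k0 n)) \<longlonglongrightarrow> 0"
        unfolding k0_def by (rule filterlim_compose[OF tD_lim filterlim_nat_ceiling_powr[OF Kcp aai]])
      have t1': "(\<lambda>n. 16 * tD (k0 n) / mm) \<longlonglongrightarrow> 0"
        using tendsto_mult_right_zero[OF t1, of "16 / mm"] by simp
      have t2: "(\<lambda>n. Gc * real n powr (- \<epsilon> / (2 * aa))) \<longlonglongrightarrow> 0"
        using \<epsilon> aa_pos by (intro tendsto_mult_right_zero tendsto_powr_neg_seq) (simp add: divide_neg_pos)
      have t3: "(\<lambda>n. 4 / (real n * mm\<^sup>2)) \<longlonglongrightarrow> 0"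
        using lim_const_over_n[of "4 / mm\<^sup>2"] by (simp add: mult.commute)
      have t4: "(\<lambda>n. 4 * s2 1 / (real n * mm)) \<longlonglongrightarrow> 0"
        using lim_const_over_n[of "4 * s2 1 / mm"] by (simp add: mult.commute)
      have "(\<lambda>n. 16 * tD (k0 n) / mm + Gc * real n powr (- \<epsilon> / (2 * aa))
        + 4 / (real n * mm\<^sup>2) + 4 * s2 1 / (real n * mm)) \<longlonglongrightarrow> 0 + 0 + 0 + 0"
        by (intro tendsto_add t1' t2 t3 t4)
      then show ?thesis unfolding Perr_def[abs_def] by simp
    qed
    have evP: "eventually (\<lambda>n. Perr n < r / 2) sequentially"
      using order_tendstoD(2)[OF Perr_lim, of "r / 2"] r by simp
    have mn_lim: "filterlim (\<lambda>n. nat \<lfloor>mn n\<rfloor>) at_top sequentially"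
      unfolding filterlim_at_top
    proof
      fix Z :: nat
      show "eventually (\<lambda>n. Z \<le> nat \<lfloor>mn n\<rfloor>) sequentially"
        using eventually_powr_ge[OF lamp aai, of "real Z + 1"] unfolding mn_def
        by eventually_elim linarith
    qed
    have txl: "(\<lambda>n. C1 powr \<nu> * lam powr (- q * \<nu>) * txi (nat \<lfloor>mn n\<rfloor>)) \<longlonglongrightarrow> 0"
      by (intro tendsto_mult_right_zero filterlim_compose[OF txi_lim mn_lim])
    have evT: "eventually (\<lambda>n. C1 powr \<nu> * lam powr (- q * \<nu>) * txi (nat \<lfloor>mn n\<rfloor>) < c0\<^sup>2 / 8) sequentially"
      using order_tendstoD(2)[OF txl, of "c0\<^sup>2 / 8"] c0p by simp
    have evK: "eventually (\<lambda>n. 1 \<le> Kc * real n powr (1 / aa)) sequentially"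
      by (rule eventually_powr_ge[OF Kcp aai])
    have ev2: "eventually (\<lambda>n. 2 \<le> n) sequentially" by (rule eventually_ge_at_top)
    from evP evT evK ev2 show ?thesis
    proof eventually_elim
      case (elim n)
      note PerrN = elim(1) and TN = elim(2) and KN = elim(3) and n2 = elim(4)
      have n1: "n \<ge> 1" using n2 by simp
      have np: "real n > 0" using n1 by simp
      have k0ge: "Kc * real n powr (1 / aa) \<le> real (k0 n)" unfolding k0_def by linarith
      have k0le: "real (k0 n) \<le> 2 * Kc * real n powr (1 / aa)"
      proof -
        define x where "x = Kc * real n powr (1 / aa)"
        have a1: "real_of_int \<lceil>x\<rceil> \<le> x + 1" by (rule of_int_ceiling_le_add_one)
        have a2: "real (nat \<lceil>x\<rceil>) = real_of_int \<lceil>x\<rceil>" using KN by (simp add: x_def)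
        have KN': "1 \<le> x" using KN by (simp add: x_def)
        have "real (nat \<lceil>x\<rceil>) \<le> 2 * x" using a1 a2 KN' by linarith
        then show ?thesis by (simp add: k0_def x_def mult.assoc)
      qed
      have k01: "k0 n \<ge> 1" using k0ge KN by linarith
      have Kcond: "16 * real n * C1 powr (1 + \<nu>) * ((norm \<xi>)\<^sup>2 + 1) / mm \<le> real (k0 n) powr aa"
      proof -
        have "(Kc * real n powr (1 / aa)) powr aa \<le> real (k0 n) powr aa"
          using k0ge Kcp np aa_pos by (intro powr_mono2) auto
        moreover have "(Kc * real n powr (1 / aa)) powr aa = X * real n"
          using Kcp np aa_pos by (simp add: powr_mult powr_powr Kca)
        ultimately show ?thesis by (simp add: X_def field_simps)
      qed
      have H6: "\<And>F. finite F \<Longrightarrow> F \<subseteq> {k0 n + 1..} \<Longrightarrow>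
                (\<Sum>j\<in>F. (d j)\<^sup>2 * (y_hat \<bullet> u j)\<^sup>2) \<le> mm / (16 * real n)"
        by (rule H6_bound[OF n1 k01 Kcond])
      define rv where "rv = c0\<^sup>2 * real n powr (- \<theta>) / 4"
      define EU where "EU = {\<omega>\<in>space M. ennreal (real n * T) \<le> (\<Sum>i=1..n. Bs i \<omega>)}"
      define EA where "EA = {\<omega>\<in>space M. ennreal (T / real n) \<le> Ae n \<omega>}"
      define Et where "Et = {\<omega>\<in>space M. ennreal (mm / (16 * real n)) \<le> At n (k0 n) \<omega>}"
      define EV where "EV = {\<omega>\<in>space M. rv \<le> Vn n (k0 n) \<omega>}"
      define E1 where "E1 = {\<omega>\<in>space M. (\<Sum>i=1..n. min ((Z i 1 \<omega>)\<^sup>2) 1) \<le> real n * mm / 2}"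
      define E2 where "E2 = {\<omega>\<in>space M. mm / 4 \<le> (Nn n 1 \<omega>)\<^sup>2}"
      have mBs[measurable]: "(\<lambda>\<omega>. \<Sum>i=1..n. Bs i \<omega>) \<in> borel_measurable M"
        by (intro borel_measurable_sum Bs_meas) auto
      have [measurable]: "Ae n \<in> borel_measurable M" "At n (k0 n) \<in> borel_measurable M"
        by (rule Ae_meas, rule At_meas)
      have [measurable]: "(\<lambda>\<omega>. Nn n j \<omega>) \<in> borel_measurable M" for j by (rule Nn_meas)
      have [measurable]: "Vn n (k0 n) \<in> borel_measurable M" unfolding Vn_def[abs_def] by measurable
      have mZ[measurable]: "(\<lambda>\<omega>. \<Sum>i=1..n. min ((Z i 1 \<omega>)\<^sup>2) 1) \<in> borel_measurable M"
        by (intro borel_measurable_sum borel_measurable_min borel_measurable_power borel_measurable_const Z_meas) auto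
      have sets: "EU \<in> sets M" "EA \<in> sets M" "Et \<in> sets M" "EV \<in> sets M" "E1 \<in> sets M" "E2 \<in> sets M"
        unfolding EU_def EA_def Et_def EV_def E1_def E2_def by measurable
      have incl: "space M - tgt n \<subseteq> EU \<union> EA \<union> Et \<union> EV \<union> E1 \<union> E2"
      proof
        fix \<omega> assume \<omega>: "\<omega> \<in> space M - tgt n"
        show "\<omega> \<in> EU \<union> EA \<union> Et \<union> EV \<union> E1 \<union> E2"
        proof (rule ccontr)
          assume nin: "\<omega> \<notin> EU \<union> EA \<union> Et \<union> EV \<union> E1 \<union> E2"
          have sp: "\<omega> \<in> space M" using \<omega> by simp
          have H1: "(\<Sum>i=1..n. Bs i \<omega>) < ennreal (real n * T)" using nin sp by (auto simp: EU_def not_le)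
          have H2: "Ae n \<omega> < ennreal (T / real n)" using nin sp by (auto simp: EA_def not_le)
          have H3: "At n (k0 n) \<omega> < ennreal (mm / (16 * real n))" using nin sp by (auto simp: Et_def not_le)
          have HV: "Vn n (k0 n) \<omega> < rv" using nin sp by (auto simp: EV_def not_le)
          have H4: "real n * mm / 2 < (\<Sum>i=1..n. min ((Z i 1 \<omega>)\<^sup>2) 1)" using nin sp by (auto simp: E1_def not_le)
          have H5: "(Nn n 1 \<omega>)\<^sup>2 < mm / 4" using nin sp by (auto simp: E2_def not_le)
          have G1: "kstop d u Y n \<omega> \<le> k0 n"
            using good_omega(1)[OF n2 Tp mm_pos H1 H2 H3 H4 H5] H6 by blast
          have G2: "(\<Sum>j\<in>F. (d j)\<^sup>2 * (y_hat \<bullet> u j)\<^sup>2) \<le> 14 * T / real n"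
            if "finite F" "F \<subseteq> {kstop d u Y n \<omega> + 1..}" for F
            using good_omega(2)[OF n2 Tp mm_pos H1 H2 H3 H4 H5 _ that] H6 by blast
          define ks where "ks = kstop d u Y n \<omega>"
          have ksk: "ks \<le> k0 n" using G1 by (simp add: ks_def)
          have mnp: "mn n > 0" using lamp np by (simp add: mn_def)
          have bias: "(\<Sum>j\<in>F. (ac j)\<^sup>2) \<le> rv" if F: "finite F" "F \<subseteq> {ks+1..}" for F
          proof -
            have F1: "F \<subseteq> {1..}" using F by auto
            have Bd: "(\<Sum>j\<in>F. (d j)\<^sup>2 * (y_hat \<bullet> u j)\<^sup>2) \<le> 14 * T / real n"
              using G2[OF F(1)] F(2) by (simp add: ks_def)
            have "(\<Sum>j\<in>F. (ac j)\<^sup>2) \<le> mn n powr bb / c1 * (14 * T / real n)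
                 + C1 powr \<nu> * mn n powr (- q * \<nu>) * txi (nat \<lfloor>mn n\<rfloor>)"
              by (rule bias_bound[OF mnp F(1) F1 Bd])
            also have "mn n powr bb / c1 * (14 * T / real n) = (mn n powr bb / real n) * (14 * T / c1)"
              by (simp add: field_simps)
            also have "mn n powr bb / real n = lam powr bb * real n powr (- \<theta>)"
              unfolding mn_def by (rule PA1[OF n1 lamp aa_pos \<theta>bb])
            also have "mn n powr (- q * \<nu>) = lam powr (- q * \<nu>) * real n powr (- \<theta>)"
              unfolding mn_def PA2[OF n1 lamp] by (simp add: \<theta>_def)
            also have "lam powr bb * real n powr (- \<theta>) * (14 * T / c1) = c0\<^sup>2 / 8 * real n powr (- \<theta>)"
              using lamb Tp \<sigma>c(1) by (simp add: field_simps)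
            also have "C1 powr \<nu> * (lam powr (- q * \<nu>) * real n powr (- \<theta>)) * txi (nat \<lfloor>mn n\<rfloor>)
                = real n powr (- \<theta>) * (C1 powr \<nu> * lam powr (- q * \<nu>) * txi (nat \<lfloor>mn n\<rfloor>))"
              by (simp add: mult_ac)
            also have "\<dots> \<le> real n powr (- \<theta>) * (c0\<^sup>2 / 8)"
              using TN by (intro mult_left_mono) auto
            finally show ?thesis by (simp add: rv_def field_simps)
          qed
          have eb: "norm (xbar \<sigma> u v (ybar Y n \<omega>) ks - x_hat) \<le> sqrt (\<Sum>j=1..ks. (Nn n j \<omega> / \<sigma> j)\<^sup>2) + sqrt rv"
            by (rule err_bound[OF n1 bias]) auto
          have "(\<Sum>j=1..ks. (Nn n j \<omega> / \<sigma> j)\<^sup>2) \<le> Vn n (k0 n) \<omega>"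
            unfolding Vn_def using ksk by (intro sum_mono2) auto
          then have Vle: "(\<Sum>j=1..ks. (Nn n j \<omega> / \<sigma> j)\<^sup>2) \<le> rv" using HV by linarith
          have s1: "sqrt (\<Sum>j=1..ks. (Nn n j \<omega> / \<sigma> j)\<^sup>2) \<le> sqrt rv"
            using Vle by (rule real_sqrt_le_mono)
          from eb s1 have "norm (xbar \<sigma> u v (ybar Y n \<omega>) ks - x_hat) \<le> 2 * sqrt rv" by linarith
          also have "2 * sqrt rv = c0 * (1 / sqrt (real n)) powr \<theta>"
            unfolding rv_def by (rule PA5[OF n1 c0p, symmetric])
          finally have fin: "norm (xbar \<sigma> u v (ybar Y n \<omega>) (kstop d u Y n \<omega>) - x_hat) \<le> c0 * (1 / sqrt (real n)) powr \<theta>"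
            by (simp add: ks_def)
          have "norm (xbar \<sigma> u v (ybar Y n \<omega>) (kstop d u Y n \<omega>) - x_hat)
             \<le> 1 * \<rho> powr (1 / (1 + q / (q + 1 + \<epsilon> - p) * \<nu>))
              * (1 / sqrt (real n)) powr ((q / (q + 1 + \<epsilon> - p) * \<nu>) / (q / (q + 1 + \<epsilon> - p) * \<nu> + 1))"
            by (subst Req) (rule fin)
          then have "\<omega> \<in> tgt n" using sp unfolding tgt_def by blast
          then show False using \<omega> by simp
        qed
      qed
      have "prob (space M - tgt n) \<le> prob (EU \<union> EA \<union> Et \<union> EV \<union> E1 \<union> E2)"
        by (rule finite_measure_mono[OF incl]) (use sets in auto)
      also have "\<dots> \<le> prob EU + prob EA + prob Et + prob EV + prob E1 + prob E2"
      proof -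
        have u: "prob (A \<union> B) \<le> prob A + prob B" if "A \<in> sets M" "B \<in> sets M" for A B
          using that by (intro measure_Un_le) auto
        have "prob (EU \<union> EA \<union> Et \<union> EV \<union> E1 \<union> E2) \<le> prob (EU \<union> EA \<union> Et \<union> EV \<union> E1) + prob E2"
          using sets by (intro u) auto
        also have "prob (EU \<union> EA \<union> Et \<union> EV \<union> E1) \<le> prob (EU \<union> EA \<union> Et \<union> EV) + prob E1"
          using sets by (intro u) auto
        also have "prob (EU \<union> EA \<union> Et \<union> EV) \<le> prob (EU \<union> EA \<union> Et) + prob EV"
          using sets by (intro u) auto
        also have "prob (EU \<union> EA \<union> Et) \<le> prob (EU \<union> EA) + prob Et"
          using sets by (intro u) auto
        also have "prob (EU \<union> EA) \<le> prob EU + prob EA"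
          using sets by (intro u) auto
        finally show ?thesis by simp
      qed
      also have "\<dots> \<le> Dc / T + Dc / T + 16 * tD (k0 n) / mm + Gc * real n powr (- \<epsilon> / (2 * aa))
                      + 4 / (real n * mm\<^sup>2) + 4 * s2 1 / (real n * mm)"
      proof -
        have pU: "prob EU \<le> Dc / T" unfolding EU_def by (rule P_U[OF n1 Tp])
        have pA: "prob EA \<le> Dc / T" unfolding EA_def by (rule P_A[OF n1 Tp])
        have pt: "prob Et \<le> 16 * tD (k0 n) / mm"
        proof -
          have "prob Et \<le> tD (k0 n) / (real n * (mm / (16 * real n)))"
            unfolding Et_def by (rule P_At[OF n1]) (use mm_pos np in auto)
          also have "\<dots> = 16 * tD (k0 n) / mm" using np mm_pos by (simp add: field_simps)
          finally show ?thesis .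
        qed
        have pV: "prob EV \<le> Gc * real n powr (- \<epsilon> / (2 * aa))"
        proof -
          have rvp: "rv > 0" using c0p np by (simp add: rv_def)
          have "prob EV \<le> (\<Sum>j=1..k0 n. s2 j / (\<sigma> j)\<^sup>2) / (real n * rv)"
            unfolding EV_def by (rule P_V[OF n1 rvp])
          also have "\<dots> \<le> (C2 / c1 * Zc * real (k0 n) powr e) / (real n * rv)"
            using var_sum_bound[OF k01] np rvp by (intro divide_right_mono) (auto simp: e_def)
          also have "\<dots> \<le> (C2 / c1 * Zc * ((2 * Kc) powr e * real n powr (e / aa))) / (real n * rv)"
          proof -
            have "real (k0 n) powr e \<le> (2 * Kc * real n powr (1 / aa)) powr e"
              using k0le e0 by (intro powr_mono2) auto
            also have "\<dots> = (2 * Kc) powr e * real n powr (e / aa)"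
              using Kcp np by (simp add: powr_mult powr_powr)
            finally have "real (k0 n) powr e \<le> (2 * Kc) powr e * real n powr (e / aa)" .
            moreover have "0 \<le> C2 / c1 * Zc" using C2_pos \<sigma>c(1) Zc_nonneg by simp
            ultimately show ?thesis using np rvp by (intro divide_right_mono mult_left_mono) auto
          qed
          also have "\<dots> = Gc * (real n powr (e / aa) / (real n * real n powr (- \<theta>)))"
            using c0p np by (simp add: Gc_def rv_def field_simps)
          also have "real n powr (e / aa) / (real n * real n powr (- \<theta>)) = real n powr (- \<epsilon> / (2 * aa))"
          proof -
            have "real n * real n powr (- \<theta>) = real n powr (1 - \<theta>)"
              using np by (simp add: powr_diff powr_minus field_simps)
            moreover have "e / aa - (1 - \<theta>) = - \<epsilon> / (2 * aa)"
            proof -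
              have "e / aa - (1 - \<theta>) = (e - bb) / aa" using \<theta>bb by (simp add: diff_divide_distrib)
              also have "e - bb = - \<epsilon> / 2" by (simp add: e_def bb_def)
              finally show ?thesis by simp
            qed
            ultimately show ?thesis using np by (simp add: powr_diff[symmetric])
          qed
          finally show ?thesis .
        qed
        have p1: "prob E1 \<le> 4 / (real n * mm\<^sup>2)" unfolding E1_def by (rule P_S1[OF n1])
        have p2: "prob E2 \<le> 4 * s2 1 / (real n * mm)" unfolding E2_def by (rule P_S2[OF n1])
        show ?thesis using pU pA pt pV p1 p2 by linarith
      qed
      also have "\<dots> = 2 * (Dc / T) + Perr n" by (simp add: Perr_def)
      also have "\<dots> < r" using DT PerrN by linarith
      finally show ?case .
    qed
  qed
  have lim: "(\<lambda>n. prob (tgt n)) \<longlonglongrightarrow> 1"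
  proof (rule tendstoI)
    fix r :: real assume r: "r > 0"
    from key[OF r] show "eventually (\<lambda>n. dist (prob (tgt n)) 1 < r) sequentially"
    proof eventually_elim
      case (elim n)
      have "prob (space M - tgt n) = 1 - prob (tgt n)" by (rule prob_compl[OF tgt_meas])
      moreover have "prob (tgt n) \<le> 1" by simp
      ultimately show ?case using elim by (simp add: dist_real_def)
    qed
  qed
  then show ?thesis by (simp only: tgt_def)
qed

end


theorem theorem2:
  fixes K :: "'x::{real_inner, banach, second_countable_topology} \<Rightarrow> 'y::{real_inner, banach, second_countable_topology}"
    and \<sigma> :: "nat \<Rightarrow> real" and u :: "nat \<Rightarrow> 'y" and v :: "nat \<Rightarrow> 'x"
    and M :: "'a measure" and Y :: "nat \<Rightarrow> 'a \<Rightarrow> 'y"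
    and x_hat :: 'x and y_hat :: 'y
    and q p \<epsilon> \<nu> \<rho> :: real
  assumes K_lin: "bounded_linear K"
    and K_compact: "compact (closure (K ` cball 0 1))"
    and K_dense: "closure (range K) = UNIV"
    and u_on: "\<And>i j. i \<ge> 1 \<Longrightarrow> j \<ge> 1 \<Longrightarrow> u i \<bullet> u j = (if i = j then 1 else 0)"
    and u_basis: "closure (span (u ` {1..})) = UNIV"
    and v_on: "\<And>i j. i \<ge> 1 \<Longrightarrow> j \<ge> 1 \<Longrightarrow> v i \<bullet> v j = (if i = j then 1 else 0)"
    and v_basis: "closure (span (v ` {1..})) = {x. \<forall>z. K z = 0 \<longrightarrow> x \<bullet> z = 0}"
    and \<sigma>_pos: "\<And>j. j \<ge> 1 \<Longrightarrow> \<sigma> j > 0"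
    and \<sigma>_mono: "\<And>j. j \<ge> 1 \<Longrightarrow> \<sigma> (Suc j) \<le> \<sigma> j"
    and \<sigma>_lim: "\<sigma> \<longlonglongrightarrow> 0"
    and svd: "\<And>j. j \<ge> 1 \<Longrightarrow> K (v j) = \<sigma> j *\<^sub>R u j"
    and y_hat: "y_hat = K x_hat"
    and M: "prob_space M"
    and Y_rv: "\<And>i. i \<ge> 1 \<Longrightarrow> Y i \<in> borel_measurable M"
    and Y_indep: "prob_space.indep_vars M (\<lambda>_. borel) Y {1..}"
    and Y_id: "\<And>i. i \<ge> 1 \<Longrightarrow> distr M borel (Y i) = distr M borel (Y 1)"
    and Y_int: "integrable M (Y 1)"
    and Y_mean: "prob_space.expectation M (Y 1) = y_hat"
    and Y_var: "integrable M (\<lambda>\<omega>. (norm (Y 1 \<omega> - y_hat))\<^sup>2)"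
    and qp: "q > 0" "p > 1" "q > p - 1"
    and \<sigma>_rate: "asymp_equiv_pos (\<lambda>j. (\<sigma> j)\<^sup>2) (\<lambda>j. real j powr (- q))"
    and Y_rate: "asymp_equiv_pos (\<lambda>j. prob_space.expectation M (\<lambda>\<omega>. ((Y 1 \<omega> - y_hat) \<bullet> u j)\<^sup>2))
                                  (\<lambda>j. real j powr (- p))"
    and \<epsilon>: "\<epsilon> > 0" "p > 1 + \<epsilon>"
    and \<nu>\<rho>: "\<nu> > 0" "\<rho> > 0"
    and source: "\<exists>\<xi>. norm \<xi> \<le> \<rho> \<and>
                   ((\<lambda>j. (\<sigma> j powr \<nu> * (\<xi> \<bullet> v j)) *\<^sub>R v j) has_sum x_hat) {1..}"
  shows "\<exists>L>0. (\<lambda>n. prob_space.prob M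
            {\<omega> \<in> space M.
               norm (xbar \<sigma> u v (ybar Y n \<omega>)
                       (kstop (\<lambda>j. real j powr ((p - 1 - \<epsilon>) / 2)) u Y n \<omega>) - x_hat)
               \<le> L * \<rho> powr (1 / (1 + q / (q + 1 + \<epsilon> - p) * \<nu>))
                   * (1 / sqrt (real n)) powr ((q / (q + 1 + \<epsilon> - p) * \<nu>)
                                               / (q / (q + 1 + \<epsilon> - p) * \<nu> + 1))})
          \<longlonglongrightarrow> 1"
proof -
  obtain \<xi> where xi: "norm \<xi> \<le> \<rho>"
    and xhs: "((\<lambda>j. (\<sigma> j powr \<nu> * (\<xi> \<bullet> v j)) *\<^sub>R v j) has_sum x_hat) {1..}"
    using source by blast
  obtain c1 C1 where c1: "0 < c1" "c1 \<le> C1"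
    and s1: "\<forall>j\<ge>1. c1 * real j powr (- q) \<le> (\<sigma> j)\<^sup>2 \<and> (\<sigma> j)\<^sup>2 \<le> C1 * real j powr (- q)"
    using \<sigma>_rate unfolding asymp_equiv_pos_def by blast
  obtain c2 C2 where c2: "0 < c2" "c2 \<le> C2"
    and s2: "\<forall>j\<ge>1. c2 * real j powr (- p) \<le> prob_space.expectation M (\<lambda>\<omega>. ((Y 1 \<omega> - y_hat) \<bullet> u j)\<^sup>2)
         \<and> prob_space.expectation M (\<lambda>\<omega>. ((Y 1 \<omega> - y_hat) \<bullet> u j)\<^sup>2) \<le> C2 * real j powr (- p)"
    using Y_rate unfolding asymp_equiv_pos_def by blast
  interpret T: thm2_setup K \<sigma> u v M Y x_hat y_hat q p \<epsilon> \<nu> \<rho> \<xi> c1 C1 c2 C2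
    apply (rule thm2_setup.intro)
    using assms xi xhs c1 s1 c2 s2 apply blast+
    done
  have dd: "(\<lambda>j. real j powr ((p - 1 - \<epsilon>) / 2)) = T.d" by (simp add: T.d_def[abs_def])
  show ?thesis
    using T.main_lim unfolding dd[symmetric]
    by (intro exI[where x=1] conjI) (simp_all only: zero_less_one)
qed

end
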